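(* For every (probabilistically) guarded nondeterministic expression $E$ there is a guarded standard equation system $\mathcal S$, all of whose free variables lie in the set of free variables of $E$, such that $E$ satisfies $\mathcal S$.
   Context: Fix a set $\mathsf{Act}$ of actions containing $\tau$ and a set $\mathsf{Var}$ of variables. Nondeterministic expressions: $E ::= 0 \mid X \mid \alpha.P \mid \mathrm{rec}\,X.E \mid E + E$; probabilistic expressions: $P ::= \partial(E) \mid P \oplus_p P$ ($0<p<1$); $\bigoplus_{k}p_kE_k$ is an iterated $\oplus$ of $\partial(E_k)$ giving $E_k$ probability $p_k$. Subdistributions, Dirac $\delta$, operational semantics: least relations with $\partial(E)\mapsto\delta_E$; $P\oplus_pQ\mapsto p\mu+(1-p)\nu$ if $P\mapsto\mu,Q\mapsto\nu$; $\alpha.P\xrightarrow{\alpha}\mu$ if $P\mapsto\mu$; $\mathrm{rec}\,X.E\xrightarrow{\alpha}\mu$ if $E[\mathrm{rec}\,X.E/X]\xrightarrow{\alpha}\mu$; $E+F\xrightarrow{\alpha}\mu$ and $F+E\xrightarrow{\alpha}\mu$ if $E\xrightarrow{\alpha}\mu$. Probabilistic unguardedness $E\rhd V$ is the least relation with: $X\rhd\{X\}$; $\tau.P\rhd V$ if $P\rhd V$; $\mathrm{rec}\,Y.E\rhd V\setminus\{Y\}$ if $E\rhd V$ and $V\ne\{Y\}$; $E+F\rhd V$ if $E\rhd V$; $E+F\rhd W$ if $F\rhd W$; $\partial(E)\rhd V$ if $E\rhd V$; $P\oplus_pQ\rhd V\cup W$ if $P\rhd V$, $Q\rhd W$. An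 expression is guarded if for every subterm $\mathrm{rec}\,X.F$, not $F\rhd\{X\}$. Provable equality $=$: least equivalence and congruence on expressions, allowing renaming of bound variables, containing all instances of the axiom schemes N1–N4, P1–P3, T1–T4, C, R1, R3–R6 and closed under R2, namely: $E+F=F+E$; $E+(F+G)=(E+F)+G$; $E+E=E$; $E+0=E$; $P\oplus_pQ=Q\oplus_{1-p}P$; $P\oplus_p(Q\oplus_{q/(1-p)}R)=(P\oplus_{p/(p+q)}Q)\oplus_{p+q}R$; $P\oplus_pP=P$; $\alpha.(\partial(\tau.\partial(E))\oplus_pP)=\alpha.(\partial(E)\oplus_pP)$; $\tau.\bigoplus_ip_i(E_i+F)+F=\tau.\bigoplus_ip_i(E_i+F)$; $\tau.\bigoplus_ip_i(E_i+\alpha.P_i)+\alpha.\bigoplus_ip_iP_i=\tau.\bigoplus_ip_i(E_i+\alpha.P_i)$; $\alpha.\bigoplus_ip_i(E_i+\tau.P_i)+\alpha.\bigoplus_ip_iP_i=\alpha.\bigoplus_ip_i(E_i+\tau.P_i)$; $\alpha.P+\alpha.Q=\alpha.P+\alpha.(P\oplus_pQ)+\alpha.Q$; $\mathrm{rec}\,X.E=E[\mathrm{rec}\,X.E/X]$; (R2) if $F=E[F/X]$ and not $E\rhd\{X\}$ then $F=\mathrm{rec}\,X.E$; $\mathrm{rec}\,X.(\tau.(\partial(X+E)\oplus_pP)+F)=\mathrm{rec}\,X.(\tau.(\partial(X+E)\oplus_pP)+\tau.P+F)$; $\mathrm{rec}\,X.(X+E)=\mathrm{rec}\,X.E$; $\mathrm{rec}\,X.(\tau.\partial(X)+E)=\mathrm{rec}\,X.\tau.\partial(E)$;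 $\mathrm{rec}\,X.(\tau.\bigoplus_ip_i(X+E_i)+F)=\mathrm{rec}\,X.(\tau.\partial(X)+\sum_iE_i+F)$. An equation system $\mathcal S:\vec X=\vec S$ consists of distinct formal variables $\vec X=(X_1,\dots,X_n)$ and expressions $\vec S=(S_1,\dots,S_n)$; its free variables $\mathrm{Var}(\mathcal S)$ are the non-formal variables occurring in the $S_i$. It is standard if each $S_i$ has the form $\sum_j\alpha_{i,j}.\bigoplus_{k=1}^np_{i,j,k}X_k+\sum_jV_{i,j}$ with $V_{i,j}\in\mathrm{Var}(\mathcal S)$. $\mathcal S$ is satisfied by $E$ if there are expressions $E_1,\dots,E_n$ with $E$ syntactically equal to $E_1$ and $E_i=S_i[\vec E/\vec X]$ provable for all $i$. For a standard $\mathcal S$, define $X_i\xrightarrow{\alpha}_{\mathcal S}\mu$ (with $\mu$ a distribution over $\{X_1,\dots,X_n\}$) iff $S_i\xrightarrow{\alpha}\mu$; combined transitions, derivations and weak transitions $\Rightarrow_{\mathcal S}$, $\xRightarrow{\alpha}_{\mathcal S}$ are defined from this relation: combined transitions are the least relation with $\delta_{X_i}\xrightarrow{\alpha}\mu$ for $X_i\xrightarrow{\alpha}_{\mathcal S}\mu$ closed under sub-convex combinations; a derivation is $(\mu_i^{\to},\mu_i^{\times})_i$ with $\mu_i^{\to}\xrightarrow{\tau}\mu_{i+1}^{\to}+\mu_{i+1}^{\times}$; $\mu\Rightarrow_{\mathcal S}\nu$ iff some derivation has $\mu=\mu_0^\to+\mu_0^\times$ and $\nu=\sum_i\mu_i^\times$;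 $\xRightarrow{\alpha}_{\mathcal S}$ is $\Rightarrow_{\mathcal S}\xrightarrow{\alpha}\Rightarrow_{\mathcal S}$. A standard $\mathcal S$ is guarded if there is no $i$ with $\delta_{X_i}\xRightarrow{\tau}_{\mathcal S}\delta_{X_i}$. *)

theory Defs
  imports Complex_Main
begin

datatype 'a act = Tau | Act 'a

datatype ('a, 'v) nexp =
    NNil
  | NVar 'v
  | Pre "'a act" "('a, 'v) pexp"
  | Rec 'v "('a, 'v) nexp"
  | NSum "('a, 'v) nexp" "('a, 'v) nexp"
and ('a, 'v) pexp =
    Dirac "('a, 'v) nexp"
  | PCh real "('a, 'v) pexp" "('a, 'v) pexp"

primrec wfN :: "('a, 'v) nexp \<Rightarrow> bool" and wfP :: "('a, 'v) pexp \<Rightarrow> bool" where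
  "wfN NNil = True"
| "wfN (NVar x) = True"
| "wfN (Pre a P) = wfP P"
| "wfN (Rec X E) = wfN E"
| "wfN (NSum E F) = (wfN E \<and> wfN F)"
| "wfP (Dirac E) = wfN E"
| "wfP (PCh p P Q) = (0 < p \<and> p < 1 \<and> wfP P \<and> wfP Q)"

primrec fvN :: "('a, 'v) nexp \<Rightarrow> 'v set" and fvP :: "('a, 'v) pexp \<Rightarrow> 'v set" where
  "fvN NNil = {}"
| "fvN (NVar x) = {x}"
| "fvN (Pre a P) = fvP P"
| "fvN (Rec X E) = fvN E - {X}"
| "fvN (NSum E F) = fvN E \<union> fvN F"
| "fvP (Dirac E) = fvN E"
| "fvP (PCh p P Q) = fvP P \<union> fvP Q"

definition fresh_for :: "'v \<Rightarrow> 'v set \<Rightarrow> 'v" where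
  "fresh_for X A = (if X \<notin> A then X else (SOME Y. Y \<notin> A))"

primrec substN :: "('v \<Rightarrow> ('a, 'v) nexp) \<Rightarrow> ('a, 'v) nexp \<Rightarrow> ('a, 'v) nexp"
  and substP :: "('v \<Rightarrow> ('a, 'v) nexp) \<Rightarrow> ('a, 'v) pexp \<Rightarrow> ('a, 'v) pexp" where
  "substN \<sigma> NNil = NNil"
| "substN \<sigma> (NVar x) = \<sigma> x"
| "substN \<sigma> (Pre a P) = Pre a (substP \<sigma> P)"
| "substN \<sigma> (Rec X E) =
     (let Y = fresh_for X (\<Union>z\<in>fvN E - {X}. fvN (\<sigma> z))
      in Rec Y (substN (\<sigma>(X := NVar Y)) E))"
| "substN \<sigma> (NSum E F) = NSum (substN \<sigma> E) (substN \<sigma> F)"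
| "substP \<sigma> (Dirac E) = Dirac (substN \<sigma> E)"
| "substP \<sigma> (PCh p P Q) = PCh p (substP \<sigma> P) (substP \<sigma> Q)"

definition subst1 :: "('a, 'v) nexp \<Rightarrow> ('a, 'v) nexp \<Rightarrow> 'v \<Rightarrow> ('a, 'v) nexp" where
  "subst1 E F X = substN (NVar(X := F)) E"

text \<open>Iterated probabilistic choice of P_1..P_n with probabilities p_1..p_n
  (right-nested, renormalising the remaining weights).\<close>
fun bigopP :: "real list \<Rightarrow> ('a, 'v) pexp list \<Rightarrow> ('a, 'v) pexp" where
  "bigopP [p] [P] = P"
| "bigopP (p # q # ps) (P # Q # Ps) =
     PCh p P (bigopP (map (\<lambda>r. r / (1 - p)) (q # ps)) (Q # Ps))"
| "bigopP _ _ = Dirac NNil"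

definition bigop :: "real list \<Rightarrow> ('a, 'v) nexp list \<Rightarrow> ('a, 'v) pexp" where
  "bigop ps Es = bigopP ps (map Dirac Es)"

definition valid_probs :: "real list \<Rightarrow> bool" where
  "valid_probs ps \<longleftrightarrow> ps \<noteq> [] \<and> (\<forall>p\<in>set ps. 0 < p) \<and> sum_list ps = 1"

fun sumlist :: "('a, 'v) nexp list \<Rightarrow> ('a, 'v) nexp" where
  "sumlist [] = NNil"
| "sumlist [E] = E"
| "sumlist (E # F # Es) = NSum E (sumlist (F # Es))"

definition delta :: "'b \<Rightarrow> 'b \<Rightarrow> real" where
  "delta x = (\<lambda>y. if y = x then 1 else 0)"

inductive pstep :: "('a, 'v) pexp \<Rightarrow> (('a, 'v) nexp \<Rightarrow> real) \<Rightarrow> bool" where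
  "pstep (Dirac E) (delta E)"
| "pstep P \<mu> \<Longrightarrow> pstep Q \<nu> \<Longrightarrow> pstep (PCh p P Q) (\<lambda>F. p * \<mu> F + (1 - p) * \<nu> F)"

inductive nstep :: "('a, 'v) nexp \<Rightarrow> 'a act \<Rightarrow> (('a, 'v) nexp \<Rightarrow> real) \<Rightarrow> bool" where
  "pstep P \<mu> \<Longrightarrow> nstep (Pre \<alpha> P) \<alpha> \<mu>"
| "nstep (subst1 E (Rec X E) X) \<alpha> \<mu> \<Longrightarrow> nstep (Rec X E) \<alpha> \<mu>"
| "nstep E \<alpha> \<mu> \<Longrightarrow> nstep (NSum E F) \<alpha> \<mu>"
| "nstep E \<alpha> \<mu> \<Longrightarrow> nstep (NSum F E) \<alpha> \<mu>"

inductive ugN :: "('a, 'v) nexp \<Rightarrow> 'v set \<Rightarrow> bool"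
  and ugP :: "('a, 'v) pexp \<Rightarrow> 'v set \<Rightarrow> bool" where
  "ugN (NVar X) {X}"
| "ugP P V \<Longrightarrow> ugN (Pre Tau P) V"
| "ugN E V \<Longrightarrow> V \<noteq> {Y} \<Longrightarrow> ugN (Rec Y E) (V - {Y})"
| "ugN E V \<Longrightarrow> ugN (NSum E F) V"
| "ugN F W \<Longrightarrow> ugN (NSum E F) W"
| "ugN E V \<Longrightarrow> ugP (Dirac E) V"
| "ugP P V \<Longrightarrow> ugP Q W \<Longrightarrow> ugP (PCh p P Q) (V \<union> W)"

primrec guardedN :: "('a, 'v) nexp \<Rightarrow> bool" and guardedP :: "('a, 'v) pexp \<Rightarrow> bool" where
  "guardedN NNil = True"
| "guardedN (NVar x) = True"
| "guardedN (Pre a P) = guardedP P"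
| "guardedN (Rec X F) = (\<not> ugN F {X} \<and> guardedN F)"
| "guardedN (NSum E F) = (guardedN E \<and> guardedN F)"
| "guardedP (Dirac E) = guardedN E"
| "guardedP (PCh p P Q) = (guardedP P \<and> guardedP Q)"

inductive eqN :: "('a, 'v) nexp \<Rightarrow> ('a, 'v) nexp \<Rightarrow> bool"
  and eqP :: "('a, 'v) pexp \<Rightarrow> ('a, 'v) pexp \<Rightarrow> bool" where
  reflN: "eqN E E"
| symN: "eqN E F \<Longrightarrow> eqN F E"
| transN: "eqN E F \<Longrightarrow> eqN F G \<Longrightarrow> eqN E G"
| reflP: "eqP P P"
| symP: "eqP P Q \<Longrightarrow> eqP Q P"
| transP: "eqP P Q \<Longrightarrow> eqP Q R \<Longrightarrow> eqP P R"
| congPre: "eqP P Q \<Longrightarrow> eqN (Pre \<alpha> P) (Pre \<alpha> Q)"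
| congRec: "eqN E F \<Longrightarrow> eqN (Rec X E) (Rec X F)"
| congSum: "eqN E E' \<Longrightarrow> eqN F F' \<Longrightarrow> eqN (NSum E F) (NSum E' F')"
| congDirac: "eqN E F \<Longrightarrow> eqP (Dirac E) (Dirac F)"
| congPCh: "eqP P P' \<Longrightarrow> eqP Q Q' \<Longrightarrow> eqP (PCh p P Q) (PCh p P' Q')"
| alpha: "Y \<notin> fvN (Rec X E) \<Longrightarrow> eqN (Rec X E) (Rec Y (subst1 E (NVar Y) X))"
| N1: "eqN (NSum E F) (NSum F E)"
| N2: "eqN (NSum E (NSum F G)) (NSum (NSum E F) G)"
| N3: "eqN (NSum E E) E"
| N4: "eqN (NSum E NNil) E"
| P1: "0 < p \<Longrightarrow> p < 1 \<Longrightarrow> eqP (PCh p P Q) (PCh (1 - p) Q P)"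
| P2: "0 < p \<Longrightarrow> 0 < q \<Longrightarrow> p + q < 1 \<Longrightarrow>
       eqP (PCh p P (PCh (q / (1 - p)) Q R)) (PCh (p + q) (PCh (p / (p + q)) P Q) R)"
| P3: "0 < p \<Longrightarrow> p < 1 \<Longrightarrow> eqP (PCh p P P) P"
| T1: "0 < p \<Longrightarrow> p < 1 \<Longrightarrow>
       eqN (Pre \<alpha> (PCh p (Dirac (Pre Tau (Dirac E))) P)) (Pre \<alpha> (PCh p (Dirac E) P))"
| T2: "valid_probs ps \<Longrightarrow> length Es = length ps \<Longrightarrow>
       eqN (NSum (Pre Tau (bigop ps (map (\<lambda>E. NSum E F) Es))) F)
           (Pre Tau (bigop ps (map (\<lambda>E. NSum E F) Es)))"
| T3: "valid_probs ps \<Longrightarrow> length Es = length ps \<Longrightarrow> length Ps = length ps \<Longrightarrow>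
       eqN (NSum (Pre Tau (bigop ps (map2 (\<lambda>E P. NSum E (Pre \<alpha> P)) Es Ps))) (Pre \<alpha> (bigopP ps Ps)))
           (Pre Tau (bigop ps (map2 (\<lambda>E P. NSum E (Pre \<alpha> P)) Es Ps)))"
| T4: "valid_probs ps \<Longrightarrow> length Es = length ps \<Longrightarrow> length Ps = length ps \<Longrightarrow>
       eqN (NSum (Pre \<alpha> (bigop ps (map2 (\<lambda>E P. NSum E (Pre Tau P)) Es Ps))) (Pre \<alpha> (bigopP ps Ps)))
           (Pre \<alpha> (bigop ps (map2 (\<lambda>E P. NSum E (Pre Tau P)) Es Ps)))"
| C: "0 < p \<Longrightarrow> p < 1 \<Longrightarrow>
      eqN (NSum (Pre \<alpha> P) (Pre \<alpha> Q))
          (NSum (NSum (Pre \<alpha> P) (Pre \<alpha> (PCh p P Q))) (Pre \<alpha> Q))"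
| R1: "eqN (Rec X E) (subst1 E (Rec X E) X)"
| R2: "eqN F (subst1 E F X) \<Longrightarrow> \<not> ugN E {X} \<Longrightarrow> eqN F (Rec X E)"
| R3: "0 < p \<Longrightarrow> p < 1 \<Longrightarrow>
       eqN (Rec X (NSum (Pre Tau (PCh p (Dirac (NSum (NVar X) E)) P)) F))
           (Rec X (NSum (NSum (Pre Tau (PCh p (Dirac (NSum (NVar X) E)) P)) (Pre Tau P)) F))"
| R4: "eqN (Rec X (NSum (NVar X) E)) (Rec X E)"
| R5: "eqN (Rec X (NSum (Pre Tau (Dirac (NVar X))) E)) (Rec X (Pre Tau (Dirac E)))"
| R6: "valid_probs ps \<Longrightarrow> length Es = length ps \<Longrightarrow>
       eqN (Rec X (NSum (Pre Tau (bigop ps (map (\<lambda>E. NSum (NVar X) E) Es))) F))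
           (Rec X (NSum (NSum (Pre Tau (Dirac (NVar X))) (sumlist Es)) F))"

type_synonym ('a, 'v) eqsys = "('v \<times> ('a, 'v) nexp) list"

definition formal :: "('a, 'v) eqsys \<Rightarrow> 'v set" where
  "formal S = set (map fst S)"

definition is_eqsys :: "('a, 'v) eqsys \<Rightarrow> bool" where
  "is_eqsys S \<longleftrightarrow> S \<noteq> [] \<and> distinct (map fst S)"

definition sys_vars :: "('a, 'v) eqsys \<Rightarrow> 'v set" where
  "sys_vars S = (\<Union>(X, T)\<in>set S. fvN T) - formal S"

definition standard_rhs :: "('a, 'v) eqsys \<Rightarrow> ('a, 'v) nexp \<Rightarrow> bool" where
  "standard_rhs S T \<longleftrightarrow>
     (\<exists>L Vs. T = sumlist (map (\<lambda>(\<alpha>, ps, Xs). Pre \<alpha> (bigop ps (map NVar Xs))) L @ map NVar Vs)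
        \<and> (\<forall>(\<alpha>, ps, Xs)\<in>set L. valid_probs ps \<and> length Xs = length ps \<and> distinct Xs
                               \<and> set Xs \<subseteq> formal S)
        \<and> set Vs \<inter> formal S = {})"

definition standard :: "('a, 'v) eqsys \<Rightarrow> bool" where
  "standard S \<longleftrightarrow> (\<forall>(X, T)\<in>set S. standard_rhs S T)"

definition satisfies :: "('a, 'v) nexp \<Rightarrow> ('a, 'v) eqsys \<Rightarrow> bool" where
  "satisfies E S \<longleftrightarrow>
     (\<exists>Es :: 'v \<Rightarrow> ('a, 'v) nexp. Es (fst (hd S)) = E \<and>
        (\<forall>(X, T)\<in>set S. eqN (Es X) (substN (\<lambda>Y. if Y \<in> formal S then Es Y else NVar Y) T)))"

definition std_step :: "('a, 'v) eqsys \<Rightarrow> 'v \<Rightarrow> 'a act \<Rightarrow> ('v \<Rightarrow> real) \<Rightarrow> bool" where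
  "std_step S X \<alpha> \<nu> \<longleftrightarrow> (\<exists>T \<mu>. (X, T) \<in> set S \<and> nstep T \<alpha> \<mu> \<and> \<nu> = (\<lambda>Y. \<mu> (NVar Y)))"

definition cstep :: "('a, 'v) eqsys \<Rightarrow> ('v \<Rightarrow> real) \<Rightarrow> 'a act \<Rightarrow> ('v \<Rightarrow> real) \<Rightarrow> bool" where
  "cstep S \<mu> \<alpha> \<nu> \<longleftrightarrow>
     (\<exists>(m :: nat) (c :: nat \<Rightarrow> real) (s :: nat \<Rightarrow> 'v) (\<nu>' :: nat \<Rightarrow> 'v \<Rightarrow> real).
        (\<forall>i<m. 0 \<le> c i \<and> std_step S (s i) \<alpha> (\<nu>' i)) \<and> (\<Sum>i<m. c i) \<le> 1 \<and>
        \<mu> = (\<lambda>Y. \<Sum>i<m. c i * delta (s i) Y) \<and>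
        \<nu> = (\<lambda>Y. \<Sum>i<m. c i * \<nu>' i Y))"

definition weak :: "('a, 'v) eqsys \<Rightarrow> ('v \<Rightarrow> real) \<Rightarrow> ('v \<Rightarrow> real) \<Rightarrow> bool" where
  "weak S \<mu> \<nu> \<longleftrightarrow>
     (\<exists>(mt :: nat \<Rightarrow> 'v \<Rightarrow> real) (mx :: nat \<Rightarrow> 'v \<Rightarrow> real).
        (\<forall>i Y. 0 \<le> mt i Y \<and> 0 \<le> mx i Y) \<and>
        (\<forall>i. cstep S (mt i) Tau (\<lambda>Y. mt (Suc i) Y + mx (Suc i) Y)) \<and>
        \<mu> = (\<lambda>Y. mt 0 Y + mx 0 Y) \<and>
        (\<forall>Y. (\<lambda>i. mx i Y) sums \<nu> Y))"

definition weak_act :: "('a, 'v) eqsys \<Rightarrow> ('v \<Rightarrow> real) \<Rightarrow> 'a act \<Rightarrow> ('v \<Rightarrow> real) \<Rightarrow> bool" where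
  "weak_act S \<mu> \<alpha> \<nu> \<longleftrightarrow> (\<exists>\<mu>1 \<mu>2. weak S \<mu> \<mu>1 \<and> cstep S \<mu>1 \<alpha> \<mu>2 \<and> weak S \<mu>2 \<nu>)"

definition guarded_sys :: "('a, 'v) eqsys \<Rightarrow> bool" where
  "guarded_sys S \<longleftrightarrow> \<not> (\<exists>X\<in>formal S. weak_act S (delta X) Tau (delta X))"

end

theory Submission
  imports Defs
begin

lemma fv_finite: "finite (fvN E)" "finite (fvP P)"
  for E :: "('a,'v) nexp" and P :: "('a,'v) pexp"
  by (induct E and P) auto
lemma fresh_for_notin:
  assumes "infinite (UNIV::'v set)" "finite (A::'v set)"
  shows "fresh_for X A \<notin> A"
proof -
  have "\<exists>Y. Y \<notin> A" using assms by (metis ex_new_if_finite)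
  then show ?thesis unfolding fresh_for_def using someI_ex[of "\<lambda>Y. Y \<notin> A"] by auto
qed
lemma fresh_for_same: "X \<notin> A \<Longrightarrow> fresh_for X A = X"
  unfolding fresh_for_def by simp
lemma substN_Rec: "substN \<sigma> (Rec X E) = Rec (fresh_for X (\<Union>z\<in>fvN E - {X}. fvN (\<sigma> z)))
   (substN (\<sigma>(X := NVar (fresh_for X (\<Union>z\<in>fvN E - {X}. fvN (\<sigma> z))))) E)"
  by (simp add: Let_def)
declare substN.simps(4)[simp del]
lemma subst_cong:
  fixes E :: "('a,'v) nexp" and P :: "('a,'v) pexp"
  shows
  "(\<And>v. v \<in> fvN E \<Longrightarrow> \<sigma> v = \<sigma>' v) \<Longrightarrow> substN \<sigma> E = substN \<sigma>' E"
  "(\<And>v. v \<in> fvP P \<Longrightarrow> \<sigma> v = \<sigma>' v) \<Longrightarrow> substP \<sigma> P = substP \<sigma>' P"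
proof (induct E and P arbitrary: \<sigma> \<sigma>' and \<sigma> \<sigma>')
  case (Rec X E)
  let ?A = "\<Union>z\<in>fvN E - {X}. fvN (\<sigma> z)"
  let ?A' = "\<Union>z\<in>fvN E - {X}. fvN (\<sigma>' z)"
  have A: "?A = ?A'" using Rec.prems by auto
  have "substN (\<sigma>(X := NVar (fresh_for X ?A))) E = substN (\<sigma>'(X := NVar (fresh_for X ?A))) E"
    by (rule Rec.hyps) (use Rec.prems in auto)
  then show ?case by (simp only: substN_Rec A)
next
  case (Pre a P)
  have "substP \<sigma> P = substP \<sigma>' P" by (rule Pre.hyps) (use Pre.prems in auto)
  then show ?case by simp
next
  case (NSum E F)
  have "substN \<sigma> E = substN \<sigma>' E" by (rule NSum.hyps) (use NSum.prems in auto)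
  moreover have "substN \<sigma> F = substN \<sigma>' F" by (rule NSum.hyps) (use NSum.prems in auto)
  ultimately show ?case by simp
next
  case (Dirac E)
  have "substN \<sigma> E = substN \<sigma>' E" by (rule Dirac.hyps) (use Dirac.prems in auto)
  then show ?case by simp
next
  case (PCh p P Q)
  have "substP \<sigma> P = substP \<sigma>' P" by (rule PCh.hyps) (use PCh.prems in auto)
  moreover have "substP \<sigma> Q = substP \<sigma>' Q" by (rule PCh.hyps) (use PCh.prems in auto)
  ultimately show ?case by simp
qed simp_all
lemma subst_id:
  fixes E :: "('a,'v) nexp" and P :: "('a,'v) pexp"
  shows
  "(\<And>v. v \<in> fvN E \<Longrightarrow> \<sigma> v = NVar v) \<Longrightarrow> substN \<sigma> E = E"
  "(\<And>v. v \<in> fvP P \<Longrightarrow> \<sigma> v = NVar v) \<Longrightarrow> substP \<sigma> P = P"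
proof (induct E and P arbitrary: \<sigma> and \<sigma>)
  case (Rec X E)
  let ?A = "\<Union>z\<in>fvN E - {X}. fvN (\<sigma> z)"
  have A: "?A = fvN E - {X}" using Rec.prems by auto
  have f: "fresh_for X ?A = X" using A by (simp add: fresh_for_same)
  have "substN (\<sigma>(X := NVar X)) E = E"
    by (rule Rec.hyps) (use Rec.prems in auto)
  then show ?case by (simp only: substN_Rec f)
next
  case (Pre a P)
  have "substP \<sigma> P = P" by (rule Pre.hyps) (use Pre.prems in auto)
  then show ?case by simp
next
  case (NSum E F)
  have "substN \<sigma> E = E" by (rule NSum.hyps) (use NSum.prems in auto)
  moreover have "substN \<sigma> F = F" by (rule NSum.hyps) (use NSum.prems in auto)
  ultimately show ?case by simp
next
  case (Dirac E)
  have "substN \<sigma> E = E" by (rule Dirac.hyps) (use Dirac.prems in auto)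
  then show ?case by simp
next
  case (PCh p P Q)
  have "substP \<sigma> P = P" by (rule PCh.hyps) (use PCh.prems in auto)
  moreover have "substP \<sigma> Q = Q" by (rule PCh.hyps) (use PCh.prems in auto)
  ultimately show ?case by simp
qed simp_all

lemma fv_subst:
  fixes E :: "('a,'v) nexp" and P :: "('a,'v) pexp"
  assumes inf: "infinite (UNIV::'v set)"
  shows "fvN (substN \<sigma> E) = (\<Union>v\<in>fvN E. fvN (\<sigma> v))"
    "fvP (substP \<sigma> P) = (\<Union>v\<in>fvP P. fvN (\<sigma> v))"
proof (induct E and P arbitrary: \<sigma> and \<sigma>)
  case (Rec X E)
  let ?A = "\<Union>z\<in>fvN E - {X}. fvN (\<sigma> z)"
  define Y where "Y = fresh_for X ?A"
  have fin: "finite ?A" using fv_finite by auto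
  have Y: "Y \<notin> ?A" unfolding Y_def by (rule fresh_for_notin[OF inf fin])
  have "fvN (substN \<sigma> (Rec X E)) = fvN (substN (\<sigma>(X := NVar Y)) E) - {Y}"
    by (simp add: substN_Rec Y_def)
  also have "\<dots> = (\<Union>v\<in>fvN E. fvN ((\<sigma>(X := NVar Y)) v)) - {Y}" using Rec by simp
  also have "\<dots> = ?A" using Y by (auto split: if_splits)
  finally show ?case by simp
qed auto

lemma subst_comp:
  fixes E :: "('a,'v) nexp" and P :: "('a,'v) pexp"
  assumes inf: "infinite (UNIV::'v set)"
  shows "eqN (substN \<sigma> (substN \<tau> E)) (substN (\<lambda>v. substN \<sigma> (\<tau> v)) E)"
    "eqP (substP \<sigma> (substP \<tau> P)) (substP (\<lambda>v. substN \<sigma> (\<tau> v)) P)"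
proof (induct E and P arbitrary: \<sigma> \<tau> and \<sigma> \<tau>)
  case (Rec X E)
  define \<kappa> where "\<kappa> = (\<lambda>v. substN \<sigma> (\<tau> v))"
  define A1 where "A1 = (\<Union>z\<in>fvN E - {X}. fvN (\<tau> z))"
  define Z1 where "Z1 = fresh_for X A1"
  define G where "G = substN (\<tau>(X := NVar Z1)) E"
  define A2 where "A2 = (\<Union>z\<in>fvN G - {Z1}. fvN (\<sigma> z))"
  define Z2 where "Z2 = fresh_for Z1 A2"
  define A3 where "A3 = (\<Union>z\<in>fvN E - {X}. fvN (\<kappa> z))"
  define Z3 where "Z3 = fresh_for X A3"
  have finA1: "finite A1" unfolding A1_def using fv_finite by auto
  have finA2: "finite A2" unfolding A2_def using fv_finite by auto
  have finA3: "finite A3" unfolding A3_def using fv_finite by auto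
  have Z1: "Z1 \<notin> A1" unfolding Z1_def by (rule fresh_for_notin[OF inf finA1])
  have Z2: "Z2 \<notin> A2" unfolding Z2_def by (rule fresh_for_notin[OF inf finA2])
  have Z3: "Z3 \<notin> A3" unfolding Z3_def by (rule fresh_for_notin[OF inf finA3])
  have L: "substN \<sigma> (substN \<tau> (Rec X E)) = Rec Z2 (substN (\<sigma>(Z1 := NVar Z2)) G)"
    by (simp add: substN_Rec Z2_def A2_def G_def Z1_def A1_def)
  have R: "substN \<kappa> (Rec X E) = Rec Z3 (substN (\<kappa>(X := NVar Z3)) E)"
    by (simp add: substN_Rec Z3_def A3_def)
  have fvG: "fvN G = (\<Union>v\<in>fvN E. fvN ((\<tau>(X := NVar Z1)) v))"
    unfolding G_def by (rule fv_subst[OF inf])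
  have Z2k: "Z2 \<notin> fvN (\<kappa> v)" if "v \<in> fvN E" "v \<noteq> X" for v
  proof -
    have "fvN (\<tau> v) \<subseteq> fvN G - {Z1}" using that Z1 fvG unfolding A1_def by auto
    then show ?thesis using Z2 unfolding A2_def \<kappa>_def fv_subst[OF inf] by auto
  qed
  have e1: "eqN (substN (\<sigma>(Z1 := NVar Z2)) G)
              (substN (\<lambda>v. substN (\<sigma>(Z1 := NVar Z2)) ((\<tau>(X := NVar Z1)) v)) E)"
    unfolding G_def by (rule Rec.hyps)
  have e2: "substN (\<lambda>v. substN (\<sigma>(Z1 := NVar Z2)) ((\<tau>(X := NVar Z1)) v)) E
          = substN (\<kappa>(X := NVar Z2)) E"
  proof (rule subst_cong)
    fix v assume v: "v \<in> fvN E"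
    show "substN (\<sigma>(Z1 := NVar Z2)) ((\<tau>(X := NVar Z1)) v) = (\<kappa>(X := NVar Z2)) v"
    proof (cases "v = X")
      case True then show ?thesis by simp
    next
      case False
      then have "Z1 \<notin> fvN (\<tau> v)" using Z1 v unfolding A1_def by auto
      then have "substN (\<sigma>(Z1 := NVar Z2)) (\<tau> v) = substN \<sigma> (\<tau> v)"
        by (intro subst_cong) auto
      then show ?thesis using False by (simp add: \<kappa>_def)
    qed
  qed
  define B where "B = substN (\<kappa>(X := NVar Z2)) E"
  have e3: "eqN (Rec Z2 B) (Rec Z3 (substN (\<kappa>(X := NVar Z3)) E))"
  proof (cases "Z2 = Z3")
    case True then show ?thesis by (simp add: B_def eqN_eqP.reflN)
  next
    case False
    have fvB: "fvN B = (\<Union>v\<in>fvN E. fvN ((\<kappa>(X := NVar Z2)) v))"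
      unfolding B_def by (rule fv_subst[OF inf])
    have "Z3 \<notin> fvN (Rec Z2 B)" using Z3 False fvB unfolding A3_def by (auto split: if_splits)
    then have a: "eqN (Rec Z2 B) (Rec Z3 (subst1 B (NVar Z3) Z2))" by (rule eqN_eqP.alpha)
    have "eqN (subst1 B (NVar Z3) Z2)
       (substN (\<lambda>v. substN (NVar(Z2 := NVar Z3)) ((\<kappa>(X := NVar Z2)) v)) E)"
      unfolding subst1_def B_def by (rule Rec.hyps)
    also have "substN (\<lambda>v. substN (NVar(Z2 := NVar Z3)) ((\<kappa>(X := NVar Z2)) v)) E
       = substN (\<kappa>(X := NVar Z3)) E"
    proof (rule subst_cong)
      fix v assume v: "v \<in> fvN E"
      show "substN (NVar(Z2 := NVar Z3)) ((\<kappa>(X := NVar Z2)) v) = (\<kappa>(X := NVar Z3)) v"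
      proof (cases "v = X")
        case True then show ?thesis by simp
      next
        case False
        then show ?thesis using Z2k[OF v False] by (auto intro: subst_id)
      qed
    qed
    finally have "eqN (subst1 B (NVar Z3) Z2) (substN (\<kappa>(X := NVar Z3)) E)" .
    then have "eqN (Rec Z3 (subst1 B (NVar Z3) Z2)) (Rec Z3 (substN (\<kappa>(X := NVar Z3)) E))"
      by (rule eqN_eqP.congRec)
    then show ?thesis using a by (rule eqN_eqP.transN[rotated])
  qed
  have "eqN (Rec Z2 (substN (\<sigma>(Z1 := NVar Z2)) G)) (Rec Z2 B)"
    using e1 e2 unfolding B_def by (simp add: eqN_eqP.congRec)
  then show ?case unfolding L \<kappa>_def[symmetric] R using e3 by (rule eqN_eqP.transN)
qed (auto intro: eqN_eqP.intros)

lemmas eN_refl = eqN_eqP.reflN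
lemmas eN_sym = eqN_eqP.symN
lemmas eN_trans[trans] = eqN_eqP.transN
lemmas eP_refl = eqN_eqP.reflP
lemmas eP_sym = eqN_eqP.symP
lemmas eP_trans[trans] = eqN_eqP.transP

lemma subst_sumlist: "substN \<sigma> (sumlist xs) = sumlist (map (substN \<sigma>) xs)"
  by (induct xs rule: sumlist.induct) auto

lemma subst_bigopP: "substP \<sigma> (bigopP ps Ps) = bigopP ps (map (substP \<sigma>) Ps)"
  by (induct ps Ps rule: bigopP.induct) auto

lemma fv_sumlist: "fvN (sumlist xs) = (\<Union>x\<in>set xs. fvN x)"
  by (induct xs rule: sumlist.induct) auto

lemma fv_bigopP: "fvP (bigopP ps Ps) \<subseteq> (\<Union>x\<in>set Ps. fvP x)"
  by (induct ps Ps rule: bigopP.induct) auto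

lemma cong_sumlist: "list_all2 eqN xs ys \<Longrightarrow> eqN (sumlist xs) (sumlist ys)"
proof (induct xs arbitrary: ys rule: sumlist.induct)
  case 1 then show ?case by (simp add: eN_refl)
next
  case (2 x) then show ?case by (cases ys) auto
next
  case (3 x y zs)
  then obtain a b cs where ys: "ys = a # b # cs" by (cases ys; cases "tl ys") auto
  then show ?case using 3 by (auto intro: eqN_eqP.congSum)
qed

lemma cong_bigopP: "list_all2 eqP Ps Qs \<Longrightarrow> eqP (bigopP ps Ps) (bigopP ps Qs)"
proof (induct ps Ps arbitrary: Qs rule: bigopP.induct)
  case (1 p P) then show ?case by (cases Qs) auto
next
  case (2 p q ps P Q Ps)
  then obtain a b cs where ys: "Qs = a # b # cs" by (cases Qs; cases "tl Qs") auto
  then show ?case using 2 by (auto intro: eqN_eqP.congPCh eP_refl)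
next
  case ("3_1" Ps) then show ?case by (cases Qs) (auto intro: eP_refl)
next
  case ("3_2" v va) then show ?case by (cases Qs) (auto intro: eP_refl)
next
  case ("3_3" v va) then show ?case by (auto simp: list_all2_Cons1 intro: eP_refl)
next
  case ("3_4" v va) then show ?case by (auto simp: list_all2_Cons1 intro: eP_refl)
next
  case ("3_5" v vb vc va) then show ?case by (auto simp: list_all2_Cons1 intro: eP_refl)
next
  case ("3_6" v vb vc va) then show ?case by (auto simp: list_all2_Cons1 intro: eP_refl)
qed

lemma sum_cons: "eqN (sumlist (x # xs)) (NSum x (sumlist xs))"
proof (cases xs)
  case Nil then show ?thesis by (simp add: eN_sym eqN_eqP.N4)
next
  case (Cons a b) then show ?thesis by (simp add: eN_refl)
qed

lemma sum_app: "eqN (NSum (sumlist xs) (sumlist ys)) (sumlist (xs @ ys))"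
proof (induct xs)
  case Nil
  have "eqN (NSum NNil (sumlist ys)) (NSum (sumlist ys) NNil)" by (rule eqN_eqP.N1)
  also have "eqN \<dots> (sumlist ys)" by (rule eqN_eqP.N4)
  finally show ?case by simp
next
  case (Cons x xs)
  have "eqN (NSum (sumlist (x # xs)) (sumlist ys)) (NSum (NSum x (sumlist xs)) (sumlist ys))"
    by (intro eqN_eqP.congSum sum_cons eN_refl)
  also have "eqN \<dots> (NSum x (NSum (sumlist xs) (sumlist ys)))"
    by (rule eN_sym, rule eqN_eqP.N2)
  also have "eqN \<dots> (NSum x (sumlist (xs @ ys)))"
    by (intro eqN_eqP.congSum Cons eN_refl)
  also have "eqN \<dots> (sumlist (x # xs @ ys))" by (rule eN_sym, rule sum_cons)
  finally show ?case by simp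
qed

lemma sum_absorb: "y \<in> set xs \<Longrightarrow> eqN (NSum (sumlist xs) y) (sumlist xs)"
proof (induct xs)
  case Nil then show ?case by simp
next
  case (Cons a xs)
  have c: "eqN (sumlist (a # xs)) (NSum a (sumlist xs))" by (rule sum_cons)
  have "eqN (NSum (sumlist (a # xs)) y) (NSum (NSum a (sumlist xs)) y)"
    by (intro eqN_eqP.congSum c eN_refl)
  also have "eqN \<dots> (NSum a (NSum (sumlist xs) y))" by (rule eN_sym, rule eqN_eqP.N2)
  also have "eqN \<dots> (NSum a (sumlist xs))"
  proof (cases "y \<in> set xs")
    case True then show ?thesis by (intro eqN_eqP.congSum Cons eN_refl)
  next
    case False
    then have y: "y = a" using Cons by simp
    have "eqN (NSum a (NSum (sumlist xs) y)) (NSum a (NSum a (sumlist xs)))"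
      unfolding y by (intro eqN_eqP.congSum eqN_eqP.N1 eN_refl)
    also have "eqN \<dots> (NSum (NSum a a) (sumlist xs))" by (rule eqN_eqP.N2)
    also have "eqN \<dots> (NSum a (sumlist xs))" by (intro eqN_eqP.congSum eqN_eqP.N3 eN_refl)
    finally show ?thesis .
  qed
  also have "eqN \<dots> (sumlist (a # xs))" by (rule eN_sym, rule c)
  finally show ?case .
qed

lemma sum_subset: "set ys \<subseteq> set xs \<Longrightarrow> eqN (NSum (sumlist xs) (sumlist ys)) (sumlist xs)"
proof (induct ys)
  case Nil then show ?case by (simp add: eqN_eqP.N4)
next
  case (Cons y ys)
  have "eqN (NSum (sumlist xs) (sumlist (y # ys))) (NSum (sumlist xs) (NSum y (sumlist ys)))"
    by (intro eqN_eqP.congSum sum_cons eN_refl)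
  also have "eqN \<dots> (NSum (NSum (sumlist xs) y) (sumlist ys))" by (rule eqN_eqP.N2)
  also have "eqN \<dots> (NSum (sumlist xs) (sumlist ys))"
    using Cons.prems by (intro eqN_eqP.congSum sum_absorb eN_refl) auto
  also have "eqN \<dots> (sumlist xs)" by (rule Cons.hyps) (use Cons.prems in auto)
  finally show ?case .
qed

lemma sum_set: "set xs = set ys \<Longrightarrow> eqN (sumlist xs) (sumlist ys)"
proof -
  assume s: "set xs = set ys"
  have "eqN (sumlist xs) (NSum (sumlist xs) (sumlist ys))" by (rule eN_sym, rule sum_subset) (use s in auto)
  also have "eqN \<dots> (NSum (sumlist ys) (sumlist xs))" by (rule eqN_eqP.N1)
  also have "eqN \<dots> (sumlist ys)" by (rule sum_subset) (use s in auto)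
  finally show ?thesis .
qed


primrec lprobs :: "('a,'v) pexp \<Rightarrow> real list" where
  "lprobs (Dirac E) = [1]"
| "lprobs (PCh p P Q) = map ((*) p) (lprobs P) @ map ((*) (1 - p)) (lprobs Q)"

primrec lexps :: "('a,'v) pexp \<Rightarrow> ('a,'v) nexp list" where
  "lexps (Dirac E) = [E]"
| "lexps (PCh p P Q) = lexps P @ lexps Q"

lemma pexp_induct[case_names Dirac PCh]:
  fixes P :: "('a,'v) pexp"
  assumes "\<And>E. Q (Dirac E)" "\<And>p P1 P2. Q P1 \<Longrightarrow> Q P2 \<Longrightarrow> Q (PCh p P1 P2)"
  shows "Q P"
  by (rule conjunct2[OF nexp_pexp.induct[of "\<lambda>_. True" Q]]) (auto intro: assms)

lemma length_lprobs: "length (lprobs P) = length (lexps P)"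
  by (induct P rule: pexp_induct) auto

lemma sum_list_mult: "sum_list (map ((*) c) xs) = c * sum_list (xs::real list)"
  by (induct xs) (auto simp: algebra_simps)

lemma sum_list_div: "sum_list (map (\<lambda>r. r / c) xs) = sum_list (xs::real list) / c"
  by (induct xs) (auto simp: add_divide_distrib)

lemma valid_lprobs: "wfP P \<Longrightarrow> valid_probs (lprobs P)"
proof (induct P rule: pexp_induct)
  case (Dirac E) then show ?case by (simp add: valid_probs_def)
next
  case (PCh p P Q)
  then show ?case by (auto simp: valid_probs_def sum_list_mult)
qed

lemma valid_probs_tail:
  assumes v: "valid_probs (a # b # ps)"
  shows "valid_probs (map (\<lambda>r. r / (1 - a)) (b # ps))" "a < 1" "0 < a"
proof -
  have pos: "\<forall>x\<in>set (a # b # ps). 0 < x" and s: "sum_list (a # b # ps) = 1"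
    using v by (auto simp: valid_probs_def)
  have "0 \<le> sum_list ps" using pos by (intro sum_list_nonneg) auto
  then show a1: "a < 1" using s pos by auto
  show "0 < a" using pos by auto
  have "sum_list (map (\<lambda>r. r / (1 - a)) (b # ps)) = sum_list (b # ps) / (1 - a)"
    by (rule sum_list_div)
  also have "\<dots> = 1" using s a1 by simp
  finally show "valid_probs (map (\<lambda>r. r / (1 - a)) (b # ps))"
    using pos a1 by (auto simp: valid_probs_def)
qed

lemma flatten_step:
  fixes p :: real
  assumes "valid_probs ps" "length Ps = length ps" "valid_probs qs" "length Qs = length qs"
    "0 < p" "p < 1"
  shows "eqP (PCh p (bigopP ps Ps) (bigopP qs Qs))
             (bigopP (map ((*) p) ps @ map ((*) (1 - p)) qs) (Ps @ Qs))"
  using assms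
proof (induct "length ps" arbitrary: ps p Ps rule: less_induct)
  case less
  obtain q qs' where qs: "qs = q # qs'" using less.prems(3) by (cases qs) (auto simp: valid_probs_def)
  obtain Q Qs' where Qs: "Qs = Q # Qs'" using less.prems(4) qs by (cases Qs) auto
  obtain a ps' where ps: "ps = a # ps'" using less.prems(1) by (cases ps) (auto simp: valid_probs_def)
  obtain P1 Ps' where Ps: "Ps = P1 # Ps'" using less.prems(2) ps by (cases Ps) auto
  have p1: "1 - p \<noteq> 0" using less.prems by simp
  show ?case
  proof (cases ps')
    case Nil
    then have a: "a = 1" using less.prems(1) ps by (simp add: valid_probs_def)
    have Ps': "Ps' = []" using less.prems(2) ps Ps Nil by simp
    have m: "map (\<lambda>r. r / (1 - p * 1)) (map ((*) (1 - p)) qs) = qs"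
      using p1 by (induct qs) auto
    have "bigopP (map ((*) p) ps @ map ((*) (1 - p)) qs) (Ps @ Qs)
      = PCh (p * 1) P1 (bigopP (map (\<lambda>r. r / (1 - p * 1)) (map ((*) (1 - p)) qs)) Qs)"
      by (simp only: ps Ps Nil Ps' a qs Qs list.map append.simps bigopP.simps)
    then show ?thesis unfolding m by (simp add: ps Ps Nil Ps' a eP_refl)
  next
    case (Cons b ps'')
    obtain P2 Ps'' where Ps': "Ps' = P2 # Ps''" using less.prems(2) ps Ps Cons by (cases Ps') auto
    have vt: "valid_probs (map (\<lambda>r. r / (1 - a)) (b # ps''))" and a1: "a < 1" and a0: "0 < a"
      using valid_probs_tail less.prems(1) unfolding ps Cons by blast+
    define ps1 where "ps1 = map (\<lambda>r. r / (1 - a)) (b # ps'')"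
    define R where "R = bigopP ps1 (P2 # Ps'')"
    define Q0 where "Q0 = bigopP qs Qs"
    have lhs: "bigopP ps Ps = PCh a P1 R" by (simp add: ps Ps Cons Ps' R_def ps1_def)
    define s where "s = p * a"
    define t where "t = p * (1 - a)"
    have s0: "0 < s" and t0: "0 < t" and st: "s + t < 1" and st2: "s + t = p"
      and st3: "s / (s + t) = a"
      using less.prems a1 a0 by (auto simp: s_def t_def algebra_simps)
    have s1: "s < 1" using st t0 by simp
    define p' where "p' = t / (1 - s)"
    have p'0: "0 < p'" and p'1: "p' < 1" using s1 t0 st by (auto simp: p'_def field_simps)
    have "eqP (PCh s P1 (PCh p' R Q0)) (PCh (s + t) (PCh (s / (s + t)) P1 R) Q0)"
      unfolding p'_def by (rule eqN_eqP.P2[OF s0 t0 st])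
    then have e1: "eqP (PCh p (PCh a P1 R) Q0) (PCh s P1 (PCh p' R Q0))"
      using st3 st2 by (simp add: eP_sym)
    have len: "length ps1 < length ps" by (simp add: ps1_def ps Cons)
    have e2: "eqP (PCh p' R Q0) (bigopP (map ((*) p') ps1 @ map ((*) (1 - p')) qs) ((P2 # Ps'') @ Qs))"
      unfolding R_def Q0_def
      by (rule less.hyps[OF len]) (use vt less.prems p'0 p'1 Ps' Ps ps Cons in \<open>auto simp: ps1_def\<close>)
    have sa: "1 - s \<noteq> 0" using s1 by simp
    have a1': "1 - a \<noteq> 0" using a1 by simp
    have m: "map (\<lambda>r. r / (1 - s)) (map ((*) p) (b # ps'') @ map ((*) (1 - p)) qs)
           = map ((*) p') ps1 @ map ((*) (1 - p')) qs"
    proof -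
      have 1: "p * r / (1 - s) = p' * (r / (1 - a))" for r
      proof -
        have "p' * (r / (1 - a)) = (1 - a) * (p * r) / ((1 - a) * (1 - s))"
          by (simp add: p'_def t_def algebra_simps)
        also have "\<dots> = p * r / (1 - s)" using a1' by (rule mult_divide_mult_cancel_left)
        finally show ?thesis by simp
      qed
      have 2: "\<And>r. (1 - p) * r / (1 - s) = (1 - p') * r"
        using sa by (simp add: p'_def t_def s_def field_simps)
      show ?thesis by (simp add: ps1_def 1 2)
    qed
    have rhs: "bigopP (map ((*) p) ps @ map ((*) (1 - p)) qs) (Ps @ Qs)
       = PCh s P1 (bigopP (map (\<lambda>r. r / (1 - s)) (map ((*) p) (b # ps'') @ map ((*) (1 - p)) qs))
            ((P2 # Ps'') @ Qs))"
      by (simp add: ps Cons Ps Ps' s_def)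
    show ?thesis unfolding lhs Q0_def[symmetric] rhs m
      using e1 eqN_eqP.congPCh[OF eP_refl e2] by (rule eP_trans)
  qed
qed

lemma flatten: "wfP P \<Longrightarrow> eqP P (bigopP (lprobs P) (map Dirac (lexps P)))"
proof (induct P rule: pexp_induct)
  case (Dirac E) then show ?case by (simp add: eP_refl)
next
  case (PCh p P Q)
  have "eqP (PCh p P Q) (PCh p (bigopP (lprobs P) (map Dirac (lexps P))) (bigopP (lprobs Q) (map Dirac (lexps Q))))"
    using PCh by (intro eqN_eqP.congPCh) auto
  also have "eqP \<dots> (bigopP (lprobs (PCh p P Q)) (map Dirac (lexps (PCh p P Q))))"
    using PCh.prems by (simp, intro flatten_step) (auto simp: valid_lprobs length_lprobs)
  finally show ?case .
qed

lemma lexps_subst: "lexps (substP \<theta> P) = map (substN \<theta>) (lexps P)"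
  by (induct P rule: pexp_induct) auto

lemma lprobs_subst: "lprobs (substP \<theta> P) = lprobs P"
  by (induct P rule: pexp_induct) auto

lemma wf_lexps: "wfP P \<Longrightarrow> E \<in> set (lexps P) \<Longrightarrow> wfN E"
  by (induct P rule: pexp_induct) auto

lemma guarded_lexps: "guardedP P \<Longrightarrow> E \<in> set (lexps P) \<Longrightarrow> guardedN E"
  by (induct P rule: pexp_induct) auto

lemma lexps_sub: "E \<in> set (lexps P) \<Longrightarrow> size E < size P"
  by (induct P rule: pexp_induct) auto

lemma fv_lexps: "fvP P = (\<Union>E\<in>set (lexps P). fvN E)"
  by (induct P rule: pexp_induct) auto

lemma ug_lexps: "(\<And>E. E \<in> set (lexps P) \<Longrightarrow> \<exists>V\<subseteq>U. ugN E V) \<Longrightarrow> \<exists>V\<subseteq>U. ugP P V"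
proof (induct P rule: pexp_induct)
  case (Dirac E) then show ?case by (auto intro: eqN_eqP.intros ugN_ugP.intros)
next
  case (PCh p P Q)
  then obtain V W where "V \<subseteq> U" "ugP P V" "W \<subseteq> U" "ugP Q W" by auto
  then show ?case by (intro exI[of _ "V \<union> W"]) (auto intro: ugN_ugP.intros)
qed

lemma ug_nonempty:
  fixes E :: "('a,'v) nexp" and P :: "('a,'v) pexp"
  shows
  "ugN E V \<Longrightarrow> V \<noteq> {}" "ugP P V \<Longrightarrow> V \<noteq> {}"
  by (induct rule: ugN_ugP.inducts) auto


definition tm :: "'a act \<times> real list \<times> 'v list \<Rightarrow> ('a,'v) nexp" where
  "tm = (\<lambda>(\<alpha>, ps, Xs). Pre \<alpha> (bigop ps (map NVar Xs)))"

type_synonym ('a,'v) rhs = "'v \<Rightarrow> ('a act \<times> real list \<times> 'v list) list \<times> 'v list"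

definition Trhs :: "('a,'v) rhs \<Rightarrow> 'v \<Rightarrow> ('a,'v) nexp" where
  "Trhs R Z = sumlist (map tm (fst (R Z)) @ map NVar (snd (R Z)))"

definition mksys :: "'v list \<Rightarrow> ('a,'v) rhs \<Rightarrow> ('a,'v) eqsys" where
  "mksys vs R = map (\<lambda>Z. (Z, Trhs R Z)) vs"

lemma nstep_sumlist: "nstep (sumlist xs) \<alpha> \<mu> \<Longrightarrow> \<exists>x\<in>set xs. nstep x \<alpha> \<mu>"
proof (induct xs rule: sumlist.induct)
  case 1 then show ?case by (auto elim: nstep.cases)
next
  case (2 x) then show ?case by simp
next
  case (3 x y zs)
  from 3(2) have "nstep x \<alpha> \<mu> \<or> nstep (sumlist (y # zs)) \<alpha> \<mu>"
    by (auto elim: nstep.cases)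
  then show ?case using 3(1) by auto
qed

lemma nstep_NVar: "\<not> nstep (NVar v) \<alpha> \<mu>"
  by (auto elim: nstep.cases)

lemma nstep_tm: "nstep (tm (\<beta>, ps, Xs)) \<alpha> \<mu> \<Longrightarrow> \<alpha> = \<beta> \<and> pstep (bigop ps (map NVar Xs)) \<mu>"
  unfolding tm_def by (auto elim: nstep.cases)

lemma pstep_bigop:
  "valid_probs ps \<Longrightarrow> length Gs = length ps \<Longrightarrow> pstep (bigopP ps (map Dirac Gs)) \<mu> \<Longrightarrow>
    \<mu> = (\<lambda>G. \<Sum>k<length ps. ps ! k * delta (Gs ! k) G)"
proof (induct "length ps" arbitrary: ps Gs \<mu> rule: less_induct)
  case less
  obtain a ps' where ps: "ps = a # ps'" using less.prems(1) by (cases ps) (auto simp: valid_probs_def)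
  obtain G1 Gs' where Gs: "Gs = G1 # Gs'" using less.prems(2) ps by (cases Gs) auto
  show ?case
  proof (cases ps')
    case Nil
    then have a: "a = 1" using less.prems(1) ps by (simp add: valid_probs_def)
    have "Gs' = []" using less.prems(2) ps Gs Nil by simp
    then have "pstep (Dirac G1) \<mu>" using less.prems(3) ps Gs Nil by simp
    then have "\<mu> = delta G1" by (auto elim: pstep.cases)
    then show ?thesis by (simp add: ps Gs Nil a)
  next
    case (Cons b ps'')
    obtain G2 Gs'' where Gs': "Gs' = G2 # Gs''" using less.prems(2) ps Gs Cons by (cases Gs') auto
    have vt: "valid_probs (map (\<lambda>r. r / (1 - a)) (b # ps''))" and a1: "a < 1"
      using valid_probs_tail less.prems(1) unfolding ps Cons by blast+
    define ps1 where "ps1 = map (\<lambda>r. r / (1 - a)) (b # ps'')"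
    have st: "pstep (PCh a (Dirac G1) (bigopP ps1 (map Dirac (G2 # Gs'')))) \<mu>"
      using less.prems(3) by (simp add: ps Cons Gs Gs' ps1_def)
    then obtain \<mu>1 \<mu>2 where m1: "pstep (Dirac G1) \<mu>1" and m2: "pstep (bigopP ps1 (map Dirac (G2 # Gs''))) \<mu>2"
      and mu: "\<mu> = (\<lambda>F. a * \<mu>1 F + (1 - a) * \<mu>2 F)"
      by (auto elim: pstep.cases)
    have mu1: "\<mu>1 = delta G1" using m1 by (auto elim: pstep.cases)
    have len: "length ps1 < length ps" by (simp add: ps1_def ps Cons)
    have mu2: "\<mu>2 = (\<lambda>G. \<Sum>k<length ps1. ps1 ! k * delta ((G2 # Gs'') ! k) G)"
      by (rule less.hyps[OF len _ _ m2]) (use vt less.prems(2) ps Gs Gs' Cons in \<open>auto simp: ps1_def\<close>)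
    have a1': "1 - a \<noteq> 0" using a1 by simp
    show ?thesis
    proof
      fix G
      have "(1 - a) * (\<Sum>k<length ps1. ps1 ! k * delta ((G2 # Gs'') ! k) G)
          = (\<Sum>k<length ps'. ps' ! k * delta (Gs' ! k) G)"
        unfolding sum_distrib_left
      proof (rule sum.cong)
        fix k assume k: "k \<in> {..<length ps'}"
        then have k': "k < length ps'" by simp
        have "ps1 ! k = ps' ! k / (1 - a)" using k' unfolding ps1_def Cons by (rule nth_map)
        then show "(1 - a) * (ps1 ! k * delta ((G2 # Gs'') ! k) G) = ps' ! k * delta (Gs' ! k) G"
          using a1' by (simp add: Gs')
      qed (simp add: ps1_def Cons)
      then have "\<mu> G = a * delta G1 G + (\<Sum>k<length ps'. ps' ! k * delta (Gs' ! k) G)"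
        by (simp add: mu mu1 mu2)
      also have "\<dots> = (\<Sum>k<length ps. ps ! k * delta (Gs ! k) G)"
        by (simp only: ps Gs length_Cons sum.lessThan_Suc_shift nth_Cons_0 nth_Cons_Suc)
      finally show "\<mu> G = (\<Sum>k<length ps. ps ! k * delta (Gs ! k) G)" .
    qed
  qed
qed

definition wellf :: "'v list \<Rightarrow> ('a,'v) rhs \<Rightarrow> bool" where
  "wellf vs R \<longleftrightarrow> (\<forall>Z\<in>set vs. \<forall>(\<alpha>,ps,Xs)\<in>set (fst (R Z)).
      valid_probs ps \<and> length Xs = length ps \<and> distinct Xs \<and> set Xs \<subseteq> set vs)"

definition wcert :: "'v list \<Rightarrow> ('a,'v) rhs \<Rightarrow> ('v \<Rightarrow> real) \<Rightarrow> bool" where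
  "wcert vs R w \<longleftrightarrow> (\<forall>Z\<in>set vs. 1 \<le> w Z) \<and> (\<forall>Z\<in>set vs. \<forall>(\<alpha>,ps,Xs)\<in>set (fst (R Z)).
      \<alpha> = Tau \<longrightarrow> 1 + (\<Sum>k<length ps. ps ! k * w (Xs ! k)) \<le> w Z)"

lemma formal_mksys: "formal (mksys vs R) = set vs"
  by (simp add: formal_def mksys_def image_image)

lemma std_step_W:
  assumes wf: "wellf vs R" and wc: "wcert vs R w"
    and st: "std_step (mksys vs R) Z Tau \<nu>"
  shows "Z \<in> set vs \<and> 1 + (\<Sum>Y\<in>set vs. \<nu> Y * w Y) \<le> w Z"
proof -
  obtain T \<mu> where ZT: "(Z, T) \<in> set (mksys vs R)" and ns: "nstep T Tau \<mu>"
    and nu: "\<nu> = (\<lambda>Y. \<mu> (NVar Y))"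
    using st unfolding std_step_def by blast
  have Z: "Z \<in> set vs" and T: "T = Trhs R Z" using ZT by (auto simp: mksys_def)
  obtain x where x: "x \<in> set (map tm (fst (R Z)) @ map NVar (snd (R Z)))" and nx: "nstep x Tau \<mu>"
    using nstep_sumlist ns unfolding T Trhs_def by blast
  then obtain \<beta> ps Xs where L: "(\<beta>, ps, Xs) \<in> set (fst (R Z))" and xt: "x = tm (\<beta>, ps, Xs)"
    using nstep_NVar by fastforce
  have b: "\<beta> = Tau" and ps: "pstep (bigop ps (map NVar Xs)) \<mu>" using nstep_tm nx xt by blast+
  have v: "valid_probs ps" "length Xs = length ps" "set Xs \<subseteq> set vs"
    using wf Z L unfolding wellf_def by fastforce+
  have mu: "\<mu> = (\<lambda>G. \<Sum>k<length ps. ps ! k * delta (map NVar Xs ! k) G)"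
    using pstep_bigop[OF v(1) _ ps[unfolded bigop_def]] v(2) by simp
  have "(\<Sum>Y\<in>set vs. \<nu> Y * w Y) = (\<Sum>Y\<in>set vs. \<Sum>k<length ps. ps ! k * (if Y = Xs ! k then w Y else 0))"
    by (rule sum.cong) (auto simp: nu mu delta_def sum_distrib_right v(2) intro!: sum.cong)
  also have "\<dots> = (\<Sum>k<length ps. \<Sum>Y\<in>set vs. ps ! k * (if Y = Xs ! k then w Y else 0))"
    by (rule sum.swap)
  also have "\<dots> = (\<Sum>k<length ps. ps ! k * w (Xs ! k))"
  proof (rule sum.cong)
    fix k assume "k \<in> {..<length ps}"
    then have "Xs ! k \<in> set vs" using v by auto
    then show "(\<Sum>Y\<in>set vs. ps ! k * (if Y = Xs ! k then w Y else 0)) = ps ! k * w (Xs ! k)"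
      by (simp add: if_distrib sum.delta cong: if_cong)
  qed simp
  finally show ?thesis using wc Z L b unfolding wcert_def by fastforce
qed

lemma cstep_W:
  assumes wf: "wellf vs R" and wc: "wcert vs R w"
    and cs: "cstep (mksys vs R) \<mu> Tau \<nu>"
  shows "(\<Sum>Y\<in>set vs. \<nu> Y * w Y) + (\<Sum>Y\<in>set vs. \<mu> Y) \<le> (\<Sum>Y\<in>set vs. \<mu> Y * w Y)"
proof -
  obtain m c s \<nu>' where h: "\<forall>i<(m::nat). 0 \<le> c i \<and> std_step (mksys vs R) (s i) Tau (\<nu>' i)"
    and "(\<Sum>i<m. c i) \<le> 1"
    and mu: "\<mu> = (\<lambda>Y. \<Sum>i<m. c i * delta (s i) Y)" and nu: "\<nu> = (\<lambda>Y. \<Sum>i<m. c i * \<nu>' i Y)"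
    using cs unfolding cstep_def by blast
  have si: "\<And>i. i < m \<Longrightarrow> s i \<in> set vs \<and> 1 + (\<Sum>Y\<in>set vs. \<nu>' i Y * w Y) \<le> w (s i)"
    using std_step_W[OF wf wc] h by blast
  have W\<nu>: "(\<Sum>Y\<in>set vs. \<nu> Y * w Y) = (\<Sum>i<m. c i * (\<Sum>Y\<in>set vs. \<nu>' i Y * w Y))"
    unfolding nu sum_distrib_left sum_distrib_right
    by (subst sum.swap) (simp add: mult.assoc)
  have W\<mu>: "(\<Sum>Y\<in>set vs. \<mu> Y * w Y) = (\<Sum>i<m. c i * w (s i))"
  proof -
    have "(\<Sum>Y\<in>set vs. \<mu> Y * w Y) = (\<Sum>i<m. \<Sum>Y\<in>set vs. c i * (if Y = s i then w Y else 0))"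
      unfolding mu sum_distrib_right by (subst sum.swap) (auto simp: delta_def intro!: sum.cong)
    also have "\<dots> = (\<Sum>i<m. c i * w (s i))"
      by (rule sum.cong) (use si in \<open>auto simp: if_distrib sum.delta cong: if_cong\<close>)
    finally show ?thesis .
  qed
  have M\<mu>: "(\<Sum>Y\<in>set vs. \<mu> Y) = (\<Sum>i<m. c i)"
  proof -
    have "(\<Sum>Y\<in>set vs. \<mu> Y) = (\<Sum>i<m. \<Sum>Y\<in>set vs. c i * (if Y = s i then 1 else 0))"
      unfolding mu by (subst sum.swap) (auto simp: delta_def intro!: sum.cong)
    also have "\<dots> = (\<Sum>i<m. c i)"
      by (rule sum.cong) (use si in \<open>auto simp: if_distrib sum.delta cong: if_cong\<close>)
    finally show ?thesis .
  qed
  have "(\<Sum>i<m. c i * (\<Sum>Y\<in>set vs. \<nu>' i Y * w Y)) + (\<Sum>i<m. c i) \<le> (\<Sum>i<m. c i * w (s i))"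
  proof -
    have "(\<Sum>i<m. c i * (\<Sum>Y\<in>set vs. \<nu>' i Y * w Y)) + (\<Sum>i<m. c i)
        = (\<Sum>i<m. c i * (1 + (\<Sum>Y\<in>set vs. \<nu>' i Y * w Y)))"
      by (simp add: sum.distrib algebra_simps)
    also have "\<dots> \<le> (\<Sum>i<m. c i * w (s i))"
      by (rule sum_mono) (use si h in \<open>auto intro: mult_left_mono\<close>)
    finally show ?thesis .
  qed
  then show ?thesis using W\<nu> W\<mu> M\<mu> by simp
qed


lemma weak_W:
  fixes vs :: "'v list" and R :: "('a,'v) rhs"
  assumes wf: "wellf vs R" and wc: "wcert vs R w"
    and wk: "weak (mksys vs R) \<mu> \<nu>"
  shows "(\<Sum>Y\<in>set vs. \<nu> Y * w Y) \<le> (\<Sum>Y\<in>set vs. \<mu> Y * w Y) \<and> (\<forall>Y. 0 \<le> \<nu> Y)"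
proof -
  obtain mt mx :: "nat \<Rightarrow> 'v \<Rightarrow> real" where nn: "\<forall>i Y. 0 \<le> mt i Y \<and> 0 \<le> mx i Y"
    and cs: "\<forall>i. cstep (mksys vs R) (mt i) Tau (\<lambda>Y. mt (Suc i) Y + mx (Suc i) Y)"
    and mu: "\<mu> = (\<lambda>Y. mt 0 Y + mx 0 Y)" and sm: "\<forall>Y. (\<lambda>i. mx i Y) sums \<nu> Y"
    using wk unfolding weak_def by blast
  define Wf where "Wf f = (\<Sum>Y\<in>set vs. f Y * w Y)" for f :: "'v \<Rightarrow> real"
  have w0: "\<And>Y. Y \<in> set vs \<Longrightarrow> 0 \<le> w Y" using wc unfolding wcert_def by force
  have Wnn: "\<And>f. (\<forall>Y. 0 \<le> f Y) \<Longrightarrow> 0 \<le> Wf f" unfolding Wf_def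
    by (intro sum_nonneg) (auto intro: mult_nonneg_nonneg w0)
  have Wadd: "\<And>f g. Wf (\<lambda>Y. f Y + g Y) = Wf f + Wf g" unfolding Wf_def
    by (simp add: sum.distrib algebra_simps)
  have claim: "(\<Sum>j<Suc n. Wf (mx j)) + Wf (mt n) \<le> Wf \<mu>" for n
  proof (induct n)
    case 0 then show ?case by (simp add: mu Wadd)
  next
    case (Suc n)
    have "Wf (\<lambda>Y. mt (Suc n) Y + mx (Suc n) Y) + (\<Sum>Y\<in>set vs. mt n Y) \<le> Wf (mt n)"
      using cstep_W[OF wf wc cs[rule_format, of n]] unfolding Wf_def .
    moreover have "0 \<le> (\<Sum>Y\<in>set vs. mt n Y)" using nn by (intro sum_nonneg) auto
    ultimately have "Wf (mt (Suc n)) + Wf (mx (Suc n)) \<le> Wf (mt n)" by (simp add: Wadd)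
    then show ?case using Suc by simp
  qed
  have bound: "(\<Sum>j<n. Wf (mx j)) \<le> Wf \<mu>" for n
  proof -
    have "(\<Sum>j<n. Wf (mx j)) \<le> (\<Sum>j<Suc n. Wf (mx j))" using Wnn nn by simp
    also have "\<dots> \<le> Wf \<mu>" using claim[of n] Wnn[of "mt n"] nn by simp
    finally show ?thesis .
  qed
  have "(\<lambda>j. Wf (mx j)) sums Wf \<nu>"
    unfolding Wf_def by (intro sums_sum sums_mult2) (use sm in auto)
  then have "Wf \<nu> \<le> Wf \<mu>" unfolding sums_def
    by (rule LIMSEQ_le_const2) (use bound in auto)
  moreover have "0 \<le> \<nu> Y" for Y
  proof -
    have "(\<lambda>n. \<Sum>j<n. mx j Y) \<longlonglongrightarrow> \<nu> Y" using sm unfolding sums_def by blast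
    then show ?thesis by (rule LIMSEQ_le_const) (use nn in \<open>auto intro: sum_nonneg\<close>)
  qed
  ultimately show ?thesis unfolding Wf_def by blast
qed

lemma guarded_mksys:
  fixes vs :: "'v list" and R :: "('a,'v) rhs"
  assumes wf: "wellf vs R" and wc: "wcert vs R w"
  shows "guarded_sys (mksys vs R)"
  unfolding guarded_sys_def formal_mksys
proof
  assume "\<exists>X\<in>set vs. weak_act (mksys vs R) (delta X) Tau (delta X)"
  then obtain X \<mu>1 \<mu>2 where X: "X \<in> set vs" and w1: "weak (mksys vs R) (delta X) \<mu>1"
    and c: "cstep (mksys vs R) \<mu>1 Tau \<mu>2" and w2: "weak (mksys vs R) \<mu>2 (delta X)"
    unfolding weak_act_def by blast
  define Wf where "Wf f = (\<Sum>Y\<in>set vs. f Y * w Y)" for f :: "'v \<Rightarrow> real"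
  have wX: "Wf (delta X) = w X"
  proof -
    have "Wf (delta X) = (\<Sum>Y\<in>set vs. if Y = X then w Y else 0)"
      unfolding Wf_def delta_def by (rule sum.cong) auto
    also have "\<dots> = w X" using X by (simp add: sum.delta)
    finally show ?thesis .
  qed
  have a: "Wf \<mu>1 \<le> w X" and nn: "\<forall>Y. 0 \<le> \<mu>1 Y"
    using weak_W[OF wf wc w1] wX unfolding Wf_def by auto
  have b: "Wf \<mu>2 + (\<Sum>Y\<in>set vs. \<mu>1 Y) \<le> Wf \<mu>1" using cstep_W[OF wf wc c] unfolding Wf_def .
  have d: "w X \<le> Wf \<mu>2" using weak_W[OF wf wc w2] wX unfolding Wf_def by auto
  have M0: "(\<Sum>Y\<in>set vs. \<mu>1 Y) \<le> 0" using a b d by linarith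
  then have z: "\<forall>Y\<in>set vs. \<mu>1 Y = 0"
    using nn sum_nonneg_eq_0_iff[of "set vs" \<mu>1] by (simp add: order_antisym sum_nonneg)
  then have "Wf \<mu>1 = 0" unfolding Wf_def by simp
  moreover have "1 \<le> w X" using wc X unfolding wcert_def by blast
  ultimately show False using b d nn M0 by (smt (verit) sum_nonneg)
qed


definition hcert :: "'v list \<Rightarrow> ('a,'v) rhs \<Rightarrow> 'v set \<Rightarrow> ('v \<Rightarrow> real) \<Rightarrow> bool" where
  "hcert vs R U h \<longleftrightarrow> (\<forall>Z\<in>set vs. 0 \<le> h Z \<and> h Z \<le> 1) \<and>
     (\<forall>Z\<in>set vs. set (snd (R Z)) \<inter> U \<noteq> {} \<longrightarrow> h Z = 1) \<and>
     (\<forall>Z\<in>set vs. \<forall>(\<alpha>,ps,Xs)\<in>set (fst (R Z)). \<alpha> = Tau \<longrightarrow> (\<Sum>k<length ps. ps ! k * h (Xs ! k)) \<le> h Z)"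

definition sol :: "'v list \<Rightarrow> ('a,'v) rhs \<Rightarrow> ('v \<Rightarrow> ('a,'v) nexp) \<Rightarrow> ('v \<Rightarrow> ('a,'v) nexp) \<Rightarrow> bool" where
  "sol vs R \<theta> Es \<longleftrightarrow> (\<forall>Z\<in>set vs. eqN (Es Z) (substN (\<lambda>Y. if Y \<in> set vs then Es Y else \<theta> Y) (Trhs R Z)))"

definition forest :: "('a,'v) nexp list \<Rightarrow> 'v set \<Rightarrow> 'v list \<Rightarrow> ('a,'v) rhs \<Rightarrow> 'v list \<Rightarrow> bool" where
  "forest Gs A vs R rs \<longleftrightarrow> length rs = length Gs \<and> distinct vs \<and> distinct rs \<and>
     set vs \<inter> (A \<union> (\<Union>G\<in>set Gs. fvN G)) = {} \<and> set rs \<subseteq> set vs \<and> wellf vs R \<and>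
     (\<forall>Z\<in>set vs. set (snd (R Z)) \<subseteq> (\<Union>G\<in>set Gs. fvN G)) \<and>
     (\<forall>k<length Gs. \<forall>v\<in>set (snd (R (rs ! k))). ugN (Gs ! k) {v}) \<and>
     (\<exists>w. wcert vs R w) \<and>
     (\<forall>k<length Gs. \<forall>U. \<not> (\<exists>V\<subseteq>U. ugN (Gs ! k) V) \<longrightarrow> (\<exists>h. hcert vs R U h \<and> h (rs ! k) < 1)) \<and>
     (\<forall>\<theta>. \<exists>Es. (\<forall>k<length Gs. Es (rs ! k) = substN \<theta> (Gs ! k)) \<and> sol vs R \<theta> Es)"

lemma subst_tm: "substN \<sigma> (tm (\<alpha>, ps, Xs)) = Pre \<alpha> (bigopP ps (map (\<lambda>X. Dirac (\<sigma> X)) Xs))"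
  by (simp add: tm_def bigop_def subst_bigopP comp_def)

lemma fv_tm: "fvN (tm (\<alpha>, ps, Xs)) \<subseteq> set Xs"
  using fv_bigopP[of ps "map Dirac (map NVar Xs)"] by (auto simp: tm_def bigop_def)

lemma fv_Trhs: "fvN (Trhs R Z) \<subseteq> (\<Union>(\<alpha>,ps,Xs)\<in>set (fst (R Z)). set Xs) \<union> set (snd (R Z))"
  unfolding Trhs_def fv_sumlist using fv_tm by fastforce

lemma fv_Trhs_vs: "wellf vs R \<Longrightarrow> Z \<in> set vs \<Longrightarrow> fvN (Trhs R Z) \<subseteq> set vs \<union> set (snd (R Z))"
  using fv_Trhs[of R Z] unfolding wellf_def by fastforce

lemma subst_Trhs: "substN \<sigma> (Trhs R Z) = sumlist (map (\<lambda>l. substN \<sigma> (tm l)) (fst (R Z)) @ map \<sigma> (snd (R Z)))"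
  by (simp add: Trhs_def subst_sumlist comp_def)

lemma cong_tm:
  assumes "\<And>X. X \<in> set Xs \<Longrightarrow> eqN (\<sigma> X) (\<sigma>' X)"
  shows "eqN (substN \<sigma> (tm (\<alpha>, ps, Xs))) (substN \<sigma>' (tm (\<alpha>, ps, Xs)))"
  unfolding subst_tm
proof (intro eqN_eqP.congPre cong_bigopP)
  show "list_all2 eqP (map (\<lambda>X. Dirac (\<sigma> X)) Xs) (map (\<lambda>X. Dirac (\<sigma>' X)) Xs)"
    unfolding list_all2_map1 list_all2_map2
    by (rule list.rel_refl_strong) (auto intro: eqN_eqP.congDirac assms)
qed

lemma cong_Trhs:
  assumes wf: "wellf vs R" and Z: "Z \<in> set vs"
    and h: "\<And>Y. Y \<in> set vs \<union> set (snd (R Z)) \<Longrightarrow> eqN (\<sigma> Y) (\<sigma>' Y)"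
  shows "eqN (substN \<sigma> (Trhs R Z)) (substN \<sigma>' (Trhs R Z))"
  unfolding subst_Trhs
proof (rule cong_sumlist)
  have tX: "\<And>\<alpha> ps Xs. (\<alpha>, ps, Xs) \<in> set (fst (R Z)) \<Longrightarrow> set Xs \<subseteq> set vs"
    using wf Z unfolding wellf_def by fastforce
  have 1: "list_all2 eqN (map (\<lambda>l. substN \<sigma> (tm l)) (fst (R Z))) (map (\<lambda>l. substN \<sigma>' (tm l)) (fst (R Z)))"
    unfolding list_all2_map1 list_all2_map2
  proof (rule list.rel_refl_strong)
    fix l assume l: "l \<in> set (fst (R Z))"
    obtain \<alpha> ps Xs where lx: "l = (\<alpha>, ps, Xs)" by (cases l) auto
    have "set Xs \<subseteq> set vs" using tX l lx by blast
    then show "eqN (substN \<sigma> (tm l)) (substN \<sigma>' (tm l))" unfolding lx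
      by (intro cong_tm h) auto
  qed
  have 2: "list_all2 eqN (map \<sigma> (snd (R Z))) (map \<sigma>' (snd (R Z)))"
    unfolding list_all2_map1 list_all2_map2
    by (rule list.rel_refl_strong) (intro h, simp)
  show "list_all2 eqN (map (\<lambda>l. substN \<sigma> (tm l)) (fst (R Z)) @ map \<sigma> (snd (R Z)))
     (map (\<lambda>l. substN \<sigma>' (tm l)) (fst (R Z)) @ map \<sigma>' (snd (R Z)))"
    using 1 2 by (rule list_all2_appendI)
qed

lemma Trhs_subst_cong:
  assumes wf: "wellf vs R" and Z: "Z \<in> set vs"
    and h: "\<And>Y. Y \<in> set vs \<union> set (snd (R Z)) \<Longrightarrow> \<sigma> Y = \<sigma>' Y"
  shows "substN \<sigma> (Trhs R Z) = substN \<sigma>' (Trhs R Z)"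
  by (rule subst_cong) (use fv_Trhs_vs[OF wf Z] h in auto)

lemma valid_sum_nth: "valid_probs ps \<Longrightarrow> (\<Sum>k<length ps. ps ! k) = 1"
  unfolding valid_probs_def by (simp add: sum_list_sum_nth atLeast0LessThan)

lemma valid_nth_pos: "valid_probs ps \<Longrightarrow> k < length ps \<Longrightarrow> 0 < ps ! k"
  unfolding valid_probs_def by auto

lemma sum_le_one:
  assumes "valid_probs ps" "\<And>k. k < length ps \<Longrightarrow> f k \<le> 1"
  shows "(\<Sum>k<length ps. ps ! k * f k) \<le> 1"
proof -
  have "(\<Sum>k<length ps. ps ! k * f k) \<le> (\<Sum>k<length ps. ps ! k * 1)"
    by (rule sum_mono) (use assms valid_nth_pos in \<open>auto intro: mult_left_mono less_imp_le\<close>)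
  also have "\<dots> = 1" using valid_sum_nth[OF assms(1)] by simp
  finally show ?thesis .
qed

lemma sum_ge_zero:
  assumes "valid_probs ps" "\<And>k. k < length ps \<Longrightarrow> 0 \<le> f k"
  shows "0 \<le> (\<Sum>k<length ps. ps ! k * f k)"
proof (rule sum_nonneg)
  fix k assume "k \<in> {..<length ps}"
  then have "0 < ps ! k" "0 \<le> f k" using assms valid_nth_pos by auto
  then show "0 \<le> ps ! k * f k" by simp
qed

lemma wellf_targets: "wellf vs R \<Longrightarrow> Z \<in> set vs \<Longrightarrow> (\<alpha>, ps, Xs) \<in> set (fst (R Z)) \<Longrightarrow>
   valid_probs ps \<and> length Xs = length ps \<and> distinct Xs \<and> (\<forall>k<length ps. Xs ! k \<in> set vs)"
  unfolding wellf_def by fastforce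

lemma forest_mono: "forest Gs A vs R rs \<Longrightarrow> A' \<subseteq> A \<Longrightarrow> forest Gs A' vs R rs"
  unfolding forest_def
  apply (elim conjE)
  apply (intro conjI)
  apply assumption+
  apply blast
  apply assumption+
  done


definition mrg :: "'v list \<Rightarrow> ('a,'v) rhs \<Rightarrow> ('a,'v) rhs \<Rightarrow> ('a,'v) rhs" where
  "mrg vs1 R1 R2 = (\<lambda>Z. if Z \<in> set vs1 then R1 Z else R2 Z)"

lemma wellf_merge:
  assumes "wellf vs1 R1" "wellf vs2 R2"
  shows "wellf (vs1 @ vs2) (mrg vs1 R1 R2)"
  unfolding wellf_def
proof (intro ballI)
  fix Z l assume Z: "Z \<in> set (vs1 @ vs2)" and l: "l \<in> set (fst (mrg vs1 R1 R2 Z))"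
  obtain \<alpha> ps Xs where lx: "l = (\<alpha>, ps, Xs)" by (cases l) auto
  show "case l of (\<alpha>, ps, Xs) \<Rightarrow> valid_probs ps \<and> length Xs = length ps \<and> distinct Xs \<and> set Xs \<subseteq> set (vs1 @ vs2)"
  proof (cases "Z \<in> set vs1")
    case True
    then have "(\<alpha>, ps, Xs) \<in> set (fst (R1 Z))" using l lx by (simp add: mrg_def)
    then show ?thesis using assms(1) True lx unfolding wellf_def by fastforce
  next
    case False
    then have Z2: "Z \<in> set vs2" using Z by simp
    have "(\<alpha>, ps, Xs) \<in> set (fst (R2 Z))" using l lx False by (simp add: mrg_def)
    then show ?thesis using assms(2) Z2 lx unfolding wellf_def by fastforce
  qed
qed

lemma wcert_merge:
  assumes wf1: "wellf vs1 R1" and wf2: "wellf vs2 R2" and d: "set vs1 \<inter> set vs2 = {}"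
    and c1: "wcert vs1 R1 w1" and c2: "wcert vs2 R2 w2"
  shows "wcert (vs1 @ vs2) (mrg vs1 R1 R2) (\<lambda>Z. if Z \<in> set vs1 then w1 Z else w2 Z)"
  unfolding wcert_def
proof (intro conjI ballI impI)
  fix Z assume "Z \<in> set (vs1 @ vs2)"
  then show "1 \<le> (if Z \<in> set vs1 then w1 Z else w2 Z)" using c1 c2 unfolding wcert_def by auto
next
  fix Z l assume Z: "Z \<in> set (vs1 @ vs2)" and l: "l \<in> set (fst (mrg vs1 R1 R2 Z))"
  obtain \<alpha> ps Xs where lx: "l = (\<alpha>, ps, Xs)" by (cases l) auto
  show "case l of (\<alpha>, ps, Xs) \<Rightarrow> \<alpha> = Tau \<longrightarrow>
      1 + (\<Sum>k<length ps. ps ! k * (if Xs ! k \<in> set vs1 then w1 (Xs ! k) else w2 (Xs ! k)))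
      \<le> (if Z \<in> set vs1 then w1 Z else w2 Z)"
  proof (cases "Z \<in> set vs1")
    case True
    have l1: "(\<alpha>, ps, Xs) \<in> set (fst (R1 Z))" using l lx True by (simp add: mrg_def)
    have t: "\<forall>k<length ps. Xs ! k \<in> set vs1" using wellf_targets[OF wf1 True l1] by blast
    have "(\<Sum>k<length ps. ps ! k * (if Xs ! k \<in> set vs1 then w1 (Xs ! k) else w2 (Xs ! k)))
        = (\<Sum>k<length ps. ps ! k * w1 (Xs ! k))" by (rule sum.cong) (use t in auto)
    then show ?thesis using c1 True l1 lx unfolding wcert_def by fastforce
  next
    case False
    then have Z2: "Z \<in> set vs2" using Z by simp
    have l1: "(\<alpha>, ps, Xs) \<in> set (fst (R2 Z))" using l lx False by (simp add: mrg_def)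
    have t: "\<forall>k<length ps. Xs ! k \<in> set vs2" using wellf_targets[OF wf2 Z2 l1] by blast
    have "(\<Sum>k<length ps. ps ! k * (if Xs ! k \<in> set vs1 then w1 (Xs ! k) else w2 (Xs ! k)))
        = (\<Sum>k<length ps. ps ! k * w2 (Xs ! k))" by (rule sum.cong) (use t d in auto)
    then show ?thesis using c2 Z2 False l1 lx unfolding wcert_def by fastforce
  qed
qed

lemma hcert_merge:
  assumes wf1: "wellf vs1 R1" and wf2: "wellf vs2 R2" and d: "set vs1 \<inter> set vs2 = {}"
    and c1: "hcert vs1 R1 U h1" and c2: "hcert vs2 R2 U h2"
  shows "hcert (vs1 @ vs2) (mrg vs1 R1 R2) U (\<lambda>Z. if Z \<in> set vs1 then h1 Z else h2 Z)"
  unfolding hcert_def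
proof (intro conjI ballI impI)
  fix Z assume "Z \<in> set (vs1 @ vs2)"
  then show "0 \<le> (if Z \<in> set vs1 then h1 Z else h2 Z)" "(if Z \<in> set vs1 then h1 Z else h2 Z) \<le> 1"
    using c1 c2 unfolding hcert_def by auto
next
  fix Z assume "Z \<in> set (vs1 @ vs2)" "set (snd (mrg vs1 R1 R2 Z)) \<inter> U \<noteq> {}"
  then show "(if Z \<in> set vs1 then h1 Z else h2 Z) = 1"
    using c1 c2 unfolding hcert_def mrg_def by (auto split: if_splits)
next
  fix Z l assume Z: "Z \<in> set (vs1 @ vs2)" and l: "l \<in> set (fst (mrg vs1 R1 R2 Z))"
  obtain \<alpha> ps Xs where lx: "l = (\<alpha>, ps, Xs)" by (cases l) auto
  show "case l of (\<alpha>, ps, Xs) \<Rightarrow> \<alpha> = Tau \<longrightarrow>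
      (\<Sum>k<length ps. ps ! k * (if Xs ! k \<in> set vs1 then h1 (Xs ! k) else h2 (Xs ! k)))
      \<le> (if Z \<in> set vs1 then h1 Z else h2 Z)"
  proof (cases "Z \<in> set vs1")
    case True
    have l1: "(\<alpha>, ps, Xs) \<in> set (fst (R1 Z))" using l lx True by (simp add: mrg_def)
    have t: "\<forall>k<length ps. Xs ! k \<in> set vs1" using wellf_targets[OF wf1 True l1] by blast
    have "(\<Sum>k<length ps. ps ! k * (if Xs ! k \<in> set vs1 then h1 (Xs ! k) else h2 (Xs ! k)))
        = (\<Sum>k<length ps. ps ! k * h1 (Xs ! k))" by (rule sum.cong) (use t in auto)
    then show ?thesis using c1 True l1 lx unfolding hcert_def by fastforce
  next
    case False
    then have Z2: "Z \<in> set vs2" using Z by simp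
    have l1: "(\<alpha>, ps, Xs) \<in> set (fst (R2 Z))" using l lx False by (simp add: mrg_def)
    have t: "\<forall>k<length ps. Xs ! k \<in> set vs2" using wellf_targets[OF wf2 Z2 l1] by blast
    have "(\<Sum>k<length ps. ps ! k * (if Xs ! k \<in> set vs1 then h1 (Xs ! k) else h2 (Xs ! k)))
        = (\<Sum>k<length ps. ps ! k * h2 (Xs ! k))" by (rule sum.cong) (use t d in auto)
    then show ?thesis using c2 Z2 False l1 lx unfolding hcert_def by fastforce
  qed
qed

lemma hcert_one: "wellf vs R \<Longrightarrow> hcert vs R U (\<lambda>_. 1)"
  unfolding hcert_def by (auto dest!: wellf_targets simp: valid_sum_nth)

lemma sol_merge:
  assumes wf1: "wellf vs1 R1" and wf2: "wellf vs2 R2"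
    and V1: "\<forall>Z\<in>set vs1. set (snd (R1 Z)) \<inter> (set vs1 \<union> set vs2) = {}"
    and V2: "\<forall>Z\<in>set vs2. set (snd (R2 Z)) \<inter> (set vs1 \<union> set vs2) = {}"
    and d: "set vs1 \<inter> set vs2 = {}"
    and s1: "sol vs1 R1 \<theta> Es1" and s2: "sol vs2 R2 \<theta> Es2"
  shows "sol (vs1 @ vs2) (mrg vs1 R1 R2) \<theta> (\<lambda>Z. if Z \<in> set vs1 then Es1 Z else Es2 Z)"
  unfolding sol_def
proof
  fix Z assume Z: "Z \<in> set (vs1 @ vs2)"
  let ?Es = "\<lambda>Z. if Z \<in> set vs1 then Es1 Z else Es2 Z"
  let ?\<sigma> = "\<lambda>Y. if Y \<in> set (vs1 @ vs2) then ?Es Y else \<theta> Y"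
  show "eqN (?Es Z) (substN ?\<sigma> (Trhs (mrg vs1 R1 R2) Z))"
  proof (cases "Z \<in> set vs1")
    case True
    have T: "Trhs (mrg vs1 R1 R2) Z = Trhs R1 Z" using True by (simp add: Trhs_def mrg_def)
    have "substN ?\<sigma> (Trhs R1 Z) = substN (\<lambda>Y. if Y \<in> set vs1 then Es1 Y else \<theta> Y) (Trhs R1 Z)"
      by (rule Trhs_subst_cong[OF wf1 True]) (use V1 True in auto)
    then show ?thesis using s1 True T unfolding sol_def by simp
  next
    case False
    then have Z2: "Z \<in> set vs2" using Z by simp
    have T: "Trhs (mrg vs1 R1 R2) Z = Trhs R2 Z" using False by (simp add: Trhs_def mrg_def)
    have "substN ?\<sigma> (Trhs R2 Z) = substN (\<lambda>Y. if Y \<in> set vs2 then Es2 Y else \<theta> Y) (Trhs R2 Z)"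
      by (rule Trhs_subst_cong[OF wf2 Z2]) (use V2 Z2 d in auto)
    then show ?thesis using s2 Z2 False T unfolding sol_def by simp
  qed
qed

lemma forest_nil: "forest [] A [] R []"
  unfolding forest_def wellf_def wcert_def sol_def by auto

lemma forest_cons:
  assumes f1: "forest [G] A1 vs1 R1 [r1]" and f2: "forest Gs A2 vs2 R2 rs2"
    and d1: "set vs1 \<inter> set vs2 = {}" and d2: "set vs1 \<inter> (\<Union>G\<in>set Gs. fvN G) = {}"
    and d3: "set vs2 \<inter> fvN G = {}"
  shows "forest (G # Gs) (A1 \<inter> A2) (vs1 @ vs2) (mrg vs1 R1 R2) (r1 # rs2)"
proof -
  let ?R = "mrg vs1 R1 R2"
  have len2: "length rs2 = length Gs" and dv1: "distinct vs1" and dv2: "distinct vs2"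
    and dr2: "distinct rs2" and a1: "set vs1 \<inter> (A1 \<union> fvN G) = {}"
    and a2: "set vs2 \<inter> (A2 \<union> (\<Union>G\<in>set Gs. fvN G)) = {}"
    and r1: "r1 \<in> set vs1" and rs2: "set rs2 \<subseteq> set vs2"
    and wf1: "wellf vs1 R1" and wf2: "wellf vs2 R2"
    and V1: "\<forall>Z\<in>set vs1. set (snd (R1 Z)) \<subseteq> fvN G"
    and V2: "\<forall>Z\<in>set vs2. set (snd (R2 Z)) \<subseteq> (\<Union>G\<in>set Gs. fvN G)"
    and I1: "\<forall>v\<in>set (snd (R1 r1)). ugN G {v}"
    and I2: "\<forall>k<length Gs. \<forall>v\<in>set (snd (R2 (rs2 ! k))). ugN (Gs ! k) {v}"
    and w1: "\<exists>w. wcert vs1 R1 w" and w2: "\<exists>w. wcert vs2 R2 w"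
    and h1: "\<forall>U. \<not> (\<exists>V\<subseteq>U. ugN G V) \<longrightarrow> (\<exists>h. hcert vs1 R1 U h \<and> h r1 < 1)"
    and h2: "\<forall>k<length Gs. \<forall>U. \<not> (\<exists>V\<subseteq>U. ugN (Gs ! k) V) \<longrightarrow> (\<exists>h. hcert vs2 R2 U h \<and> h (rs2 ! k) < 1)"
    and t1: "\<forall>\<theta>. \<exists>Es. Es r1 = substN \<theta> G \<and> sol vs1 R1 \<theta> Es"
    and t2: "\<forall>\<theta>. \<exists>Es. (\<forall>k<length Gs. Es (rs2 ! k) = substN \<theta> (Gs ! k)) \<and> sol vs2 R2 \<theta> Es"
    using f1 f2 unfolding forest_def by auto
  have R1: "\<And>Z. Z \<in> set vs1 \<Longrightarrow> ?R Z = R1 Z" and R2: "\<And>Z. Z \<notin> set vs1 \<Longrightarrow> ?R Z = R2 Z"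
    by (auto simp: mrg_def)
  have rs2n: "\<And>k. k < length Gs \<Longrightarrow> rs2 ! k \<in> set vs2" using rs2 len2 by auto
  have wf: "wellf (vs1 @ vs2) ?R" by (rule wellf_merge[OF wf1 wf2])
  have wc: "\<exists>w. wcert (vs1 @ vs2) ?R w" using wcert_merge[OF wf1 wf2 d1] w1 w2 by blast
  have hc: "\<forall>k<length (G # Gs). \<forall>U. \<not> (\<exists>V\<subseteq>U. ugN ((G # Gs) ! k) V) \<longrightarrow>
     (\<exists>h. hcert (vs1 @ vs2) ?R U h \<and> h ((r1 # rs2) ! k) < 1)"
  proof (intro allI impI)
    fix k U assume k: "k < length (G # Gs)" and c: "\<not> (\<exists>V\<subseteq>U. ugN ((G # Gs) ! k) V)"
    show "\<exists>h. hcert (vs1 @ vs2) ?R U h \<and> h ((r1 # rs2) ! k) < 1"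
    proof (cases k)
      case 0
      then obtain h where h: "hcert vs1 R1 U h" "h r1 < 1" using h1 c by auto
      have "hcert (vs1 @ vs2) ?R U (\<lambda>Z. if Z \<in> set vs1 then h Z else 1)"
        by (rule hcert_merge[OF wf1 wf2 d1 h(1) hcert_one[OF wf2]])
      then show ?thesis using h r1 0 by (intro exI[of _ "\<lambda>Z. if Z \<in> set vs1 then h Z else 1"]) auto
    next
      case (Suc j)
      then have j: "j < length Gs" using k by simp
      have c': "\<not> (\<exists>V\<subseteq>U. ugN (Gs ! j) V)" using c Suc by simp
      obtain h where h: "hcert vs2 R2 U h" "h (rs2 ! j) < 1" using h2[rule_format, OF j c'] by blast
      have "hcert (vs1 @ vs2) ?R U (\<lambda>Z. if Z \<in> set vs1 then 1 else h Z)"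
        by (rule hcert_merge[OF wf1 wf2 d1 hcert_one[OF wf1] h(1)])
      then show ?thesis using h rs2n[OF j] d1 Suc
        by (intro exI[of _ "\<lambda>Z. if Z \<in> set vs1 then 1 else h Z"]) auto
    qed
  qed
  have th: "\<forall>\<theta>. \<exists>Es. (\<forall>k<length (G # Gs). Es ((r1 # rs2) ! k) = substN \<theta> ((G # Gs) ! k)) \<and>
        sol (vs1 @ vs2) ?R \<theta> Es"
  proof
    fix \<theta>
    obtain Es1 where e1: "Es1 r1 = substN \<theta> G" "sol vs1 R1 \<theta> Es1" using t1 by blast
    obtain Es2 where e2: "\<forall>k<length Gs. Es2 (rs2 ! k) = substN \<theta> (Gs ! k)" "sol vs2 R2 \<theta> Es2"
      using t2 by blast
    have s: "sol (vs1 @ vs2) ?R \<theta> (\<lambda>Z. if Z \<in> set vs1 then Es1 Z else Es2 Z)"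
      by (rule sol_merge[OF wf1 wf2 _ _ d1 e1(2) e2(2)]) (use V1 V2 a1 a2 d2 d3 in blast)+
    show "\<exists>Es. (\<forall>k<length (G # Gs). Es ((r1 # rs2) ! k) = substN \<theta> ((G # Gs) ! k)) \<and>
        sol (vs1 @ vs2) ?R \<theta> Es"
    proof (intro exI conjI allI impI)
      fix k assume k: "k < length (G # Gs)"
      show "(if (r1 # rs2) ! k \<in> set vs1 then Es1 ((r1 # rs2) ! k) else Es2 ((r1 # rs2) ! k))
         = substN \<theta> ((G # Gs) ! k)"
      proof (cases k)
        case 0 then show ?thesis using e1 r1 by simp
      next
        case (Suc j)
        then have j: "j < length Gs" using k by simp
        then show ?thesis using e2 rs2n[OF j] d1 Suc by auto
      qed
    qed (rule s)
  qed
  have I: "\<forall>k<length (G # Gs). \<forall>v\<in>set (snd (?R ((r1 # rs2) ! k))). ugN ((G # Gs) ! k) {v}"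
  proof (intro allI impI ballI)
    fix k v assume k: "k < length (G # Gs)" and v: "v \<in> set (snd (?R ((r1 # rs2) ! k)))"
    show "ugN ((G # Gs) ! k) {v}"
    proof (cases k)
      case 0 then show ?thesis using v I1 R1[OF r1] by simp
    next
      case (Suc j)
      then have j: "j < length Gs" using k by simp
      have "rs2 ! j \<notin> set vs1" using rs2n[OF j] d1 by auto
      then show ?thesis using v I2 j R2 Suc by simp
    qed
  qed
  have V: "\<forall>Z\<in>set (vs1 @ vs2). set (snd (?R Z)) \<subseteq> (\<Union>G\<in>set (G # Gs). fvN G)"
  proof
    fix Z assume Z: "Z \<in> set (vs1 @ vs2)"
    show "set (snd (?R Z)) \<subseteq> (\<Union>G\<in>set (G # Gs). fvN G)"
    proof (cases "Z \<in> set vs1")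
      case True then show ?thesis using V1 R1[OF True] by auto
    next
      case False then show ?thesis using V2 R2[OF False] Z by auto
    qed
  qed
  show ?thesis unfolding forest_def
    apply (intro conjI)
    subgoal using len2 by simp
    subgoal using dv1 dv2 d1 by simp
    subgoal
    proof -
      have "r1 \<notin> set rs2" using r1 rs2 d1 by blast
      then show ?thesis using dr2 by simp
    qed
    subgoal
    proof -
      have "set vs1 \<inter> (A1 \<inter> A2 \<union> (\<Union>G\<in>set (G # Gs). fvN G)) = {}"
        using a1 d2 by auto
      moreover have "set vs2 \<inter> (A1 \<inter> A2 \<union> (\<Union>G\<in>set (G # Gs). fvN G)) = {}"
        using a2 d3 by auto
      ultimately show ?thesis by (simp add: Int_Un_distrib2)
    qed
    subgoal using r1 rs2 by auto
    subgoal by (rule wf)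
    subgoal by (rule V)
    subgoal by (rule I)
    subgoal by (rule wc)
    subgoal by (rule hc)
    subgoal by (rule th)
    done
qed


lemma wellf_extend:
  assumes wf: "wellf vs R" and ag: "\<And>Z. Z \<in> set vs \<Longrightarrow> R' Z = R Z"
    and r0: "\<And>\<alpha> ps Xs. (\<alpha>, ps, Xs) \<in> set (fst (R' X0)) \<Longrightarrow>
        valid_probs ps \<and> length Xs = length ps \<and> distinct Xs \<and> set Xs \<subseteq> set vs"
  shows "wellf (X0 # vs) R'"
  unfolding wellf_def
proof (intro ballI)
  fix Z l assume Z: "Z \<in> set (X0 # vs)" and l: "l \<in> set (fst (R' Z))"
  obtain \<alpha> ps Xs where lx: "l = (\<alpha>, ps, Xs)" by (cases l) auto
  show "case l of (\<alpha>, ps, Xs) \<Rightarrow> valid_probs ps \<and> length Xs = length ps \<and> distinct Xs \<and> set Xs \<subseteq> set (X0 # vs)"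
  proof (cases "Z = X0")
    case True then show ?thesis using r0 l lx by fastforce
  next
    case False
    then have Z2: "Z \<in> set vs" using Z by simp
    have "(\<alpha>, ps, Xs) \<in> set (fst (R Z))" using l lx ag[OF Z2] by simp
    then show ?thesis using wf Z2 lx unfolding wellf_def by fastforce
  qed
qed

lemma wcert_extend:
  assumes wf: "wellf vs R" and wc: "wcert vs R w" and X0: "X0 \<notin> set vs"
    and ag: "\<And>Z. Z \<in> set vs \<Longrightarrow> R' Z = R Z" and c1: "1 \<le> c"
    and tg: "\<And>\<alpha> ps Xs. (\<alpha>, ps, Xs) \<in> set (fst (R' X0)) \<Longrightarrow> \<forall>k<length ps. Xs ! k \<in> set vs"
    and r0: "\<And>ps Xs. (Tau, ps, Xs) \<in> set (fst (R' X0)) \<Longrightarrow> 1 + (\<Sum>k<length ps. ps ! k * w (Xs ! k)) \<le> c"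
  shows "wcert (X0 # vs) R' (w(X0 := c))"
  unfolding wcert_def
proof (intro conjI ballI impI)
  fix Z assume "Z \<in> set (X0 # vs)"
  then show "1 \<le> (w(X0 := c)) Z" using wc c1 unfolding wcert_def by auto
next
  fix Z l assume Z: "Z \<in> set (X0 # vs)" and l: "l \<in> set (fst (R' Z))"
  obtain \<alpha> ps Xs where lx: "l = (\<alpha>, ps, Xs)" by (cases l) auto
  have t: "\<forall>k<length ps. Xs ! k \<in> set vs"
  proof (cases "Z = X0")
    case True then show ?thesis using tg l lx by blast
  next
    case False
    then have Z2: "Z \<in> set vs" using Z by simp
    have "(\<alpha>, ps, Xs) \<in> set (fst (R Z))" using l lx ag[OF Z2] by simp
    then show ?thesis using wellf_targets[OF wf Z2] by blast
  qed
  have s: "(\<Sum>k<length ps. ps ! k * (w(X0 := c)) (Xs ! k)) = (\<Sum>k<length ps. ps ! k * w (Xs ! k))"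
    by (rule sum.cong) (use t X0 in auto)
  show "case l of (\<alpha>, ps, Xs) \<Rightarrow> \<alpha> = Tau \<longrightarrow> 1 + (\<Sum>k<length ps. ps ! k * (w(X0 := c)) (Xs ! k)) \<le> (w(X0 := c)) Z"
  proof (cases "Z = X0")
    case True then show ?thesis using r0 l lx s by auto
  next
    case False
    then have Z2: "Z \<in> set vs" using Z by simp
    have "(\<alpha>, ps, Xs) \<in> set (fst (R Z))" using l lx ag[OF Z2] by simp
    then show ?thesis using wc Z2 lx s False unfolding wcert_def by fastforce
  qed
qed

lemma hcert_extend:
  assumes wf: "wellf vs R" and hc: "hcert vs R U h" and X0: "X0 \<notin> set vs"
    and ag: "\<And>Z. Z \<in> set vs \<Longrightarrow> R' Z = R Z" and c0: "0 \<le> c" and c1: "c \<le> 1"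
    and cu: "set (snd (R' X0)) \<inter> U \<noteq> {} \<Longrightarrow> c = 1"
    and tg: "\<And>\<alpha> ps Xs. (\<alpha>, ps, Xs) \<in> set (fst (R' X0)) \<Longrightarrow> \<forall>k<length ps. Xs ! k \<in> set vs"
    and r0: "\<And>ps Xs. (Tau, ps, Xs) \<in> set (fst (R' X0)) \<Longrightarrow> (\<Sum>k<length ps. ps ! k * h (Xs ! k)) \<le> c"
  shows "hcert (X0 # vs) R' U (h(X0 := c))"
  unfolding hcert_def
proof (intro conjI ballI impI)
  fix Z assume "Z \<in> set (X0 # vs)"
  then show "0 \<le> (h(X0 := c)) Z" "(h(X0 := c)) Z \<le> 1" using hc c0 c1 unfolding hcert_def by auto
next
  fix Z assume Z: "Z \<in> set (X0 # vs)" and u: "set (snd (R' Z)) \<inter> U \<noteq> {}"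
  show "(h(X0 := c)) Z = 1"
  proof (cases "Z = X0")
    case True then show ?thesis using cu u by simp
  next
    case False
    then have Z2: "Z \<in> set vs" using Z by simp
    then show ?thesis using hc u ag[OF Z2] False unfolding hcert_def by auto
  qed
next
  fix Z l assume Z: "Z \<in> set (X0 # vs)" and l: "l \<in> set (fst (R' Z))"
  obtain \<alpha> ps Xs where lx: "l = (\<alpha>, ps, Xs)" by (cases l) auto
  have t: "\<forall>k<length ps. Xs ! k \<in> set vs"
  proof (cases "Z = X0")
    case True then show ?thesis using tg l lx by blast
  next
    case False
    then have Z2: "Z \<in> set vs" using Z by simp
    have "(\<alpha>, ps, Xs) \<in> set (fst (R Z))" using l lx ag[OF Z2] by simp
    then show ?thesis using wellf_targets[OF wf Z2] by blast
  qed
  have s: "(\<Sum>k<length ps. ps ! k * (h(X0 := c)) (Xs ! k)) = (\<Sum>k<length ps. ps ! k * h (Xs ! k))"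
    by (rule sum.cong) (use t X0 in auto)
  show "case l of (\<alpha>, ps, Xs) \<Rightarrow> \<alpha> = Tau \<longrightarrow> (\<Sum>k<length ps. ps ! k * (h(X0 := c)) (Xs ! k)) \<le> (h(X0 := c)) Z"
  proof (cases "Z = X0")
    case True then show ?thesis using r0 l lx s by auto
  next
    case False
    then have Z2: "Z \<in> set vs" using Z by simp
    have "(\<alpha>, ps, Xs) \<in> set (fst (R Z))" using l lx ag[OF Z2] by simp
    then show ?thesis using hc Z2 lx s False unfolding hcert_def by fastforce
  qed
qed

lemma hcert_min:
  assumes h1: "hcert vs R U h1" and h2: "hcert vs R U h2" and wf: "wellf vs R"
  shows "hcert vs R U (\<lambda>Z. min (h1 Z) (h2 Z))"
  unfolding hcert_def
proof (intro conjI ballI impI)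
  fix Z assume "Z \<in> set vs"
  then show "0 \<le> min (h1 Z) (h2 Z)" "min (h1 Z) (h2 Z) \<le> 1" using h1 h2 unfolding hcert_def by auto
next
  fix Z assume "Z \<in> set vs" "set (snd (R Z)) \<inter> U \<noteq> {}"
  then show "min (h1 Z) (h2 Z) = 1" using h1 h2 unfolding hcert_def by auto
next
  fix Z l assume Z: "Z \<in> set vs" and l: "l \<in> set (fst (R Z))"
  obtain \<alpha> ps Xs where lx: "l = (\<alpha>, ps, Xs)" by (cases l) auto
  have v: "valid_probs ps" using wellf_targets[OF wf Z] l lx by blast
  have pos: "\<And>k. k < length ps \<Longrightarrow> 0 \<le> ps ! k" using valid_nth_pos[OF v] less_imp_le by blast
  show "case l of (\<alpha>, ps, Xs) \<Rightarrow> \<alpha> = Tau \<longrightarrow> (\<Sum>k<length ps. ps ! k * min (h1 (Xs ! k)) (h2 (Xs ! k))) \<le> min (h1 Z) (h2 Z)"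
  proof (simp only: lx prod.case, intro impI)
    assume a: "\<alpha> = Tau"
    have "(\<Sum>k<length ps. ps ! k * min (h1 (Xs ! k)) (h2 (Xs ! k))) \<le> (\<Sum>k<length ps. ps ! k * h1 (Xs ! k))"
      by (rule sum_mono) (use pos in \<open>auto intro: mult_left_mono\<close>)
    also have "\<dots> \<le> h1 Z" using h1 Z l lx a unfolding hcert_def by fastforce
    finally have 1: "(\<Sum>k<length ps. ps ! k * min (h1 (Xs ! k)) (h2 (Xs ! k))) \<le> h1 Z" .
    have "(\<Sum>k<length ps. ps ! k * min (h1 (Xs ! k)) (h2 (Xs ! k))) \<le> (\<Sum>k<length ps. ps ! k * h2 (Xs ! k))"
      by (rule sum_mono) (use pos in \<open>auto intro: mult_left_mono\<close>)
    also have "\<dots> \<le> h2 Z" using h2 Z l lx a unfolding hcert_def by fastforce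
    finally show "(\<Sum>k<length ps. ps ! k * min (h1 (Xs ! k)) (h2 (Xs ! k))) \<le> min (h1 Z) (h2 Z)"
      using 1 by simp
  qed
qed

lemma sol_extend:
  assumes wf: "wellf vs R" and s: "sol vs R \<theta> Es" and X0: "X0 \<notin> set vs"
    and ag: "\<And>Z. Z \<in> set vs \<Longrightarrow> R' Z = R Z"
    and nv: "\<And>Z. Z \<in> set vs \<Longrightarrow> X0 \<notin> set (snd (R Z))"
    and r0: "eqN E0 (substN (\<lambda>Y. if Y \<in> set (X0 # vs) then (Es(X0 := E0)) Y else \<theta> Y) (Trhs R' X0))"
  shows "sol (X0 # vs) R' \<theta> (Es(X0 := E0))"
  unfolding sol_def
proof
  fix Z assume Z: "Z \<in> set (X0 # vs)"
  show "eqN ((Es(X0 := E0)) Z) (substN (\<lambda>Y. if Y \<in> set (X0 # vs) then (Es(X0 := E0)) Y else \<theta> Y) (Trhs R' Z))"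
  proof (cases "Z = X0")
    case True then show ?thesis using r0 by simp
  next
    case False
    then have Z2: "Z \<in> set vs" using Z by simp
    have T: "Trhs R' Z = Trhs R Z" using ag[OF Z2] by (simp add: Trhs_def)
    have "substN (\<lambda>Y. if Y \<in> set (X0 # vs) then (Es(X0 := E0)) Y else \<theta> Y) (Trhs R Z)
        = substN (\<lambda>Y. if Y \<in> set vs then Es Y else \<theta> Y) (Trhs R Z)"
      by (rule Trhs_subst_cong[OF wf Z2]) (use X0 nv[OF Z2] in auto)
    then show ?thesis using s Z2 False T unfolding sol_def by simp
  qed
qed


lemma forestD:
  assumes "forest Gs A vs R rs"
  shows "length rs = length Gs" "distinct vs" "distinct rs"
    "set vs \<inter> (A \<union> (\<Union>G\<in>set Gs. fvN G)) = {}" "set rs \<subseteq> set vs" "wellf vs R"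
    "\<forall>Z\<in>set vs. set (snd (R Z)) \<subseteq> (\<Union>G\<in>set Gs. fvN G)"
    "\<forall>k<length Gs. \<forall>v\<in>set (snd (R (rs ! k))). ugN (Gs ! k) {v}"
    "\<exists>w. wcert vs R w"
    "\<forall>k<length Gs. \<forall>U. \<not> (\<exists>V\<subseteq>U. ugN (Gs ! k) V) \<longrightarrow> (\<exists>h. hcert vs R U h \<and> h (rs ! k) < 1)"
    "\<forall>\<theta>. \<exists>Es. (\<forall>k<length Gs. Es (rs ! k) = substN \<theta> (Gs ! k)) \<and> sol vs R \<theta> Es"
  using assms unfolding forest_def by blast+

lemma forestI:
  assumes "length rs = length Gs" "distinct vs" "distinct rs"
    "set vs \<inter> (A \<union> (\<Union>G\<in>set Gs. fvN G)) = {}" "set rs \<subseteq> set vs" "wellf vs R"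
    "\<forall>Z\<in>set vs. set (snd (R Z)) \<subseteq> (\<Union>G\<in>set Gs. fvN G)"
    "\<forall>k<length Gs. \<forall>v\<in>set (snd (R (rs ! k))). ugN (Gs ! k) {v}"
    "\<exists>w. wcert vs R w"
    "\<forall>k<length Gs. \<forall>U. \<not> (\<exists>V\<subseteq>U. ugN (Gs ! k) V) \<longrightarrow> (\<exists>h. hcert vs R U h \<and> h (rs ! k) < 1)"
    "\<forall>\<theta>. \<exists>Es. (\<forall>k<length Gs. Es (rs ! k) = substN \<theta> (Gs ! k)) \<and> sol vs R \<theta> Es"
  shows "forest Gs A vs R rs"
  unfolding forest_def using assms by blast

lemma wellf_D: "wellf vs R \<Longrightarrow> Z \<in> set vs \<Longrightarrow> (\<alpha>, ps, Xs) \<in> set (fst (R Z)) \<Longrightarrow>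
   valid_probs ps \<and> length Xs = length ps \<and> distinct Xs \<and> set Xs \<subseteq> set vs"
  unfolding wellf_def by fastforce

lemma wcert_D: "wcert vs R w \<Longrightarrow> Z \<in> set vs \<Longrightarrow> (Tau, ps, Xs) \<in> set (fst (R Z)) \<Longrightarrow>
   1 + (\<Sum>k<length ps. ps ! k * w (Xs ! k)) \<le> w Z"
  unfolding wcert_def by fastforce

lemma wcert_D1: "wcert vs R w \<Longrightarrow> Z \<in> set vs \<Longrightarrow> 1 \<le> w Z"
  unfolding wcert_def by fastforce

lemma hcert_D: "hcert vs R U h \<Longrightarrow> Z \<in> set vs \<Longrightarrow> (Tau, ps, Xs) \<in> set (fst (R Z)) \<Longrightarrow>
   (\<Sum>k<length ps. ps ! k * h (Xs ! k)) \<le> h Z"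
  unfolding hcert_def by fastforce

lemma hcert_D1: "hcert vs R U h \<Longrightarrow> Z \<in> set vs \<Longrightarrow> 0 \<le> h Z \<and> h Z \<le> 1"
  unfolding hcert_def by fastforce

lemma hcert_D2: "hcert vs R U h \<Longrightarrow> Z \<in> set vs \<Longrightarrow> set (snd (R Z)) \<inter> U \<noteq> {} \<Longrightarrow> h Z = 1"
  unfolding hcert_def by fastforce

lemma sol_D: "sol vs R \<theta> Es \<Longrightarrow> Z \<in> set vs \<Longrightarrow>
   eqN (Es Z) (substN (\<lambda>Y. if Y \<in> set vs then Es Y else \<theta> Y) (Trhs R Z))"
  unfolding sol_def by blast

lemma flatten_subst: "wfP P \<Longrightarrow> eqP (substP \<theta> P) (bigopP (lprobs P) (map Dirac (map (substN \<theta>) (lexps P))))"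
proof (induct P rule: pexp_induct)
  case (Dirac E) then show ?case by (simp add: eP_refl)
next
  case (PCh p P Q)
  have "eqP (substP \<theta> (PCh p P Q)) (PCh p (bigopP (lprobs P) (map Dirac (map (substN \<theta>) (lexps P))))
          (bigopP (lprobs Q) (map Dirac (map (substN \<theta>) (lexps Q)))))"
    using PCh by (simp, intro eqN_eqP.congPCh) auto
  also have "eqP \<dots> (bigopP (lprobs (PCh p P Q)) (map Dirac (map (substN \<theta>) (lexps (PCh p P Q)))))"
    using PCh.prems by (simp, intro flatten_step) (auto simp: valid_lprobs length_lprobs)
  finally show ?case .
qed


lemma forest_nsum:
  assumes f: "forest [E, F] A vs R [r1, r2]" and X0: "X0 \<notin> set vs" "X0 \<notin> A" "X0 \<notin> fvN E" "X0 \<notin> fvN F"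
  shows "forest [NSum E F] A (X0 # vs) (R(X0 := (fst (R r1) @ fst (R r2), snd (R r1) @ snd (R r2)))) [X0]"
proof -
  define R' where "R' = R(X0 := (fst (R r1) @ fst (R r2), snd (R r1) @ snd (R r2)))"
  have dv: "distinct vs" and disj: "set vs \<inter> (A \<union> (fvN E \<union> fvN F)) = {}"
    and rr: "r1 \<in> set vs" "r2 \<in> set vs" and wf: "wellf vs R"
    and V: "\<forall>Z\<in>set vs. set (snd (R Z)) \<subseteq> fvN E \<union> fvN F"
  proof -
    show "distinct vs" by (rule forestD(2)[OF f])
    show "set vs \<inter> (A \<union> (fvN E \<union> fvN F)) = {}" using forestD(4)[OF f] by simp
    show "r1 \<in> set vs" "r2 \<in> set vs" using forestD(5)[OF f] by simp_all
    show "wellf vs R" by (rule forestD(6)[OF f])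
    show "\<forall>Z\<in>set vs. set (snd (R Z)) \<subseteq> fvN E \<union> fvN F" using forestD(7)[OF f] by simp
  qed
  have I1: "\<And>v. v \<in> set (snd (R r1)) \<Longrightarrow> ugN E {v}" using forestD(8)[OF f, rule_format, of 0] by simp
  have I2: "\<And>v. v \<in> set (snd (R r2)) \<Longrightarrow> ugN F {v}" using forestD(8)[OF f, rule_format, of 1] by simp
  obtain w where wc: "wcert vs R w" using forestD(9)[OF f] by blast
  have hE: "\<And>U. \<not> (\<exists>V\<subseteq>U. ugN E V) \<Longrightarrow> \<exists>h. hcert vs R U h \<and> h r1 < 1"
    using forestD(10)[OF f, rule_format, of 0] by simp
  have hF: "\<And>U. \<not> (\<exists>V\<subseteq>U. ugN F V) \<Longrightarrow> \<exists>h. hcert vs R U h \<and> h r2 < 1"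
    using forestD(10)[OF f, rule_format, of 1] by simp
  have ag: "\<And>Z. Z \<in> set vs \<Longrightarrow> R' Z = R Z" using X0 by (auto simp: R'_def)
  have R'X0: "R' X0 = (fst (R r1) @ fst (R r2), snd (R r1) @ snd (R r2))" by (simp add: R'_def)
  have tg: "\<And>\<alpha> ps Xs. (\<alpha>, ps, Xs) \<in> set (fst (R' X0)) \<Longrightarrow> (\<alpha>, ps, Xs) \<in> set (fst (R r1)) \<or> (\<alpha>, ps, Xs) \<in> set (fst (R r2))"
    by (simp add: R'X0)
  have wf': "wellf (X0 # vs) R'"
  proof (rule wellf_extend[OF wf ag])
    fix \<alpha> ps Xs assume that: "(\<alpha>, ps, Xs) \<in> set (fst (R' X0))"
    show "valid_probs ps \<and> length Xs = length ps \<and> distinct Xs \<and> set Xs \<subseteq> set vs"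
      using tg[OF that] wellf_D[OF wf rr(1)] wellf_D[OF wf rr(2)] by blast
  qed
  have tgs: "\<And>\<alpha> ps Xs. (\<alpha>, ps, Xs) \<in> set (fst (R' X0)) \<Longrightarrow> \<forall>k<length ps. Xs ! k \<in> set vs"
    using tg wellf_targets[OF wf] rr by blast
  have wc': "\<exists>w. wcert (X0 # vs) R' w"
  proof
    show "wcert (X0 # vs) R' (w(X0 := max (w r1) (w r2)))"
    proof (rule wcert_extend[OF wf wc X0(1) ag _ tgs])
      show "1 \<le> max (w r1) (w r2)" using wcert_D1[OF wc rr(1)] by simp
    next
      fix ps Xs assume l: "(Tau, ps, Xs) \<in> set (fst (R' X0))"
      show "1 + (\<Sum>k<length ps. ps ! k * w (Xs ! k)) \<le> max (w r1) (w r2)"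
        using tg[OF l] wcert_D[OF wc rr(1)] wcert_D[OF wc rr(2)] by (auto simp: le_max_iff_disj)
    qed
  qed
  have hc': "\<forall>k<length [NSum E F]. \<forall>U. \<not> (\<exists>V\<subseteq>U. ugN ([NSum E F] ! k) V) \<longrightarrow>
      (\<exists>h. hcert (X0 # vs) R' U h \<and> h ([X0] ! k) < 1)"
  proof (intro allI impI)
    fix k U assume k: "k < length [NSum E F]" and c: "\<not> (\<exists>V\<subseteq>U. ugN ([NSum E F] ! k) V)"
    then have c': "\<not> (\<exists>V\<subseteq>U. ugN (NSum E F) V)" by simp
    have cE: "\<not> (\<exists>V\<subseteq>U. ugN E V)" using c' by (auto intro: ugN_ugP.intros)
    have cF: "\<not> (\<exists>V\<subseteq>U. ugN F V)" using c' by (auto intro: ugN_ugP.intros)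
    obtain h1 where h1: "hcert vs R U h1" "h1 r1 < 1" using hE[OF cE] by blast
    obtain h2 where h2: "hcert vs R U h2" "h2 r2 < 1" using hF[OF cF] by blast
    define h where "h = (\<lambda>Z. min (h1 Z) (h2 Z))"
    have hc: "hcert vs R U h" unfolding h_def by (rule hcert_min[OF h1(1) h2(1) wf])
    define c where "c = max (h r1) (h r2)"
    have c1: "c < 1" using h1 h2 by (auto simp: c_def h_def)
    have "hcert (X0 # vs) R' U (h(X0 := c))"
    proof (rule hcert_extend[OF wf hc X0(1) ag _ _ _ tgs])
      show "0 \<le> c" using hcert_D1[OF hc rr(1)] by (simp add: c_def le_max_iff_disj)
      show "c \<le> 1" using c1 by simp
    next
      assume u: "set (snd (R' X0)) \<inter> U \<noteq> {}"
      then obtain u where "u \<in> U" "u \<in> set (snd (R r1)) \<or> u \<in> set (snd (R r2))" by (auto simp: R'X0)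
      then have "ugN (NSum E F) {u}" "{u} \<subseteq> U" using I1 I2 by (auto intro: ugN_ugP.intros)
      then show "c = 1" using c' by blast
    next
      fix ps Xs assume l: "(Tau, ps, Xs) \<in> set (fst (R' X0))"
      show "(\<Sum>k<length ps. ps ! k * h (Xs ! k)) \<le> c"
        using tg[OF l] hcert_D[OF hc rr(1)] hcert_D[OF hc rr(2)] by (auto simp: c_def le_max_iff_disj)
    qed
    then show "\<exists>h. hcert (X0 # vs) R' U h \<and> h ([X0] ! k) < 1" using c1 k by (intro exI[of _ "h(X0 := c)"]) simp
  qed
  have th': "\<forall>\<theta>. \<exists>Es. (\<forall>k<length [NSum E F]. Es ([X0] ! k) = substN \<theta> ([NSum E F] ! k)) \<and> sol (X0 # vs) R' \<theta> Es"
  proof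
    fix \<theta>
    obtain Es where Es: "\<forall>k<length [E, F]. Es ([r1, r2] ! k) = substN \<theta> ([E, F] ! k)" "sol vs R \<theta> Es"
      using forestD(11)[OF f] by blast
    have e1: "Es r1 = substN \<theta> E" using Es(1) by (metis length_Cons list.size(3) nth_Cons_0 zero_less_Suc)
    have e2: "Es r2 = substN \<theta> F" using Es(1)[rule_format, of 1] by simp
    define E0 where "E0 = substN \<theta> (NSum E F)"
    define \<sigma>' where "\<sigma>' = (\<lambda>Y. if Y \<in> set (X0 # vs) then (Es(X0 := E0)) Y else \<theta> Y)"
    define \<sigma> where "\<sigma> = (\<lambda>Y. if Y \<in> set vs then Es Y else \<theta> Y)"
    have nv: "\<And>Z. Z \<in> set vs \<Longrightarrow> X0 \<notin> set (snd (R Z))" using V X0 by blast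
    have ss: "\<And>Z. Z \<in> set vs \<Longrightarrow> substN \<sigma> (Trhs R Z) = substN \<sigma>' (Trhs R Z)"
      by (rule Trhs_subst_cong[OF wf]) (use X0 nv in \<open>auto simp: \<sigma>_def \<sigma>'_def\<close>)
    define xs1 where "xs1 = map (\<lambda>l. substN \<sigma>' (tm l)) (fst (R r1)) @ map \<sigma>' (snd (R r1))"
    define xs2 where "xs2 = map (\<lambda>l. substN \<sigma>' (tm l)) (fst (R r2)) @ map \<sigma>' (snd (R r2))"
    have q1: "eqN (substN \<theta> E) (sumlist xs1)"
    proof -
      have "eqN (Es r1) (substN \<sigma> (Trhs R r1))" using sol_D[OF Es(2) rr(1)] unfolding \<sigma>_def .
      then have "eqN (Es r1) (substN \<sigma>' (Trhs R r1))" using ss[OF rr(1)] by simp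
      then show ?thesis unfolding subst_Trhs xs1_def e1 .
    qed
    have q2: "eqN (substN \<theta> F) (sumlist xs2)"
    proof -
      have "eqN (Es r2) (substN \<sigma> (Trhs R r2))" using sol_D[OF Es(2) rr(2)] unfolding \<sigma>_def .
      then have "eqN (Es r2) (substN \<sigma>' (Trhs R r2))" using ss[OF rr(2)] by simp
      then show ?thesis unfolding subst_Trhs xs2_def e2 .
    qed
    have r0: "eqN E0 (substN \<sigma>' (Trhs R' X0))"
    proof -
      have "eqN E0 (NSum (sumlist xs1) (sumlist xs2))"
        unfolding E0_def using q1 q2 by (simp add: eqN_eqP.congSum)
      also have "eqN \<dots> (sumlist (xs1 @ xs2))" by (rule sum_app)
      also have "eqN \<dots> (substN \<sigma>' (Trhs R' X0))"
        unfolding subst_Trhs R'X0 by (rule sum_set) (auto simp: xs1_def xs2_def)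
      finally show ?thesis .
    qed
    have "sol (X0 # vs) R' \<theta> (Es(X0 := E0))"
      using sol_extend[OF wf Es(2) X0(1) ag nv r0[unfolded \<sigma>'_def]] .
    then show "\<exists>Es. (\<forall>k<length [NSum E F]. Es ([X0] ! k) = substN \<theta> ([NSum E F] ! k)) \<and> sol (X0 # vs) R' \<theta> Es"
      by (intro exI[of _ "Es(X0 := E0)"]) (simp add: E0_def)
  qed
  have V': "\<forall>Z\<in>set (X0 # vs). set (snd (R' Z)) \<subseteq> (\<Union>G\<in>set [NSum E F]. fvN G)"
    using V ag rr by (auto simp: R'X0)
  have I': "\<forall>k<length [NSum E F]. \<forall>v\<in>set (snd (R' ([X0] ! k))). ugN ([NSum E F] ! k) {v}"
    using I1 I2 by (auto simp: R'X0 intro: ugN_ugP.intros)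
  show ?thesis unfolding R'_def[symmetric]
    apply (rule forestI)
    subgoal by simp
    subgoal using dv X0 by simp
    subgoal by simp
    subgoal using disj X0 by auto
    subgoal by simp
    subgoal by (rule wf')
    subgoal by (rule V')
    subgoal by (rule I')
    subgoal by (rule wc')
    subgoal by (rule hc')
    subgoal by (rule th')
    done
qed


lemma forest_pre:
  assumes f: "forest (lexps P) A vs R rs" and wP: "wfP P"
    and X0: "X0 \<notin> set vs" "X0 \<notin> A" "X0 \<notin> fvP P"
  shows "forest [Pre \<alpha> P] A (X0 # vs) (R(X0 := ([(\<alpha>, lprobs P, rs)], []))) [X0]"
proof -
  define R' where "R' = R(X0 := ([(\<alpha>, lprobs P, rs)], []))"
  define ps where "ps = lprobs P"
  have len: "length rs = length (lexps P)" by (rule forestD(1)[OF f])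
  have lenp: "length ps = length rs" using len by (simp add: ps_def length_lprobs)
  have dv: "distinct vs" by (rule forestD(2)[OF f])
  have drs: "distinct rs" by (rule forestD(3)[OF f])
  have disj: "set vs \<inter> (A \<union> fvP P) = {}" using forestD(4)[OF f] by (simp add: fv_lexps)
  have rsv: "set rs \<subseteq> set vs" by (rule forestD(5)[OF f])
  have wf: "wellf vs R" by (rule forestD(6)[OF f])
  have V: "\<forall>Z\<in>set vs. set (snd (R Z)) \<subseteq> fvP P" using forestD(7)[OF f] by (simp add: fv_lexps)
  have vp: "valid_probs ps" unfolding ps_def by (rule valid_lprobs[OF wP])
  have ag: "\<And>Z. Z \<in> set vs \<Longrightarrow> R' Z = R Z" using X0 by (auto simp: R'_def)
  have R'X0: "R' X0 = ([(\<alpha>, ps, rs)], [])" by (simp add: R'_def ps_def)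
  have tg: "\<And>\<beta> qs Xs. (\<beta>, qs, Xs) \<in> set (fst (R' X0)) \<Longrightarrow> \<beta> = \<alpha> \<and> qs = ps \<and> Xs = rs"
    by (simp add: R'X0)
  have rsk: "\<And>k. k < length ps \<Longrightarrow> rs ! k \<in> set vs" using rsv lenp by auto
  have tgs: "\<And>\<beta> qs Xs. (\<beta>, qs, Xs) \<in> set (fst (R' X0)) \<Longrightarrow> \<forall>k<length qs. Xs ! k \<in> set vs"
    using tg rsk by blast
  have wf': "wellf (X0 # vs) R'"
  proof (rule wellf_extend[OF wf ag])
    fix \<beta> qs Xs assume "(\<beta>, qs, Xs) \<in> set (fst (R' X0))"
    then show "valid_probs qs \<and> length Xs = length qs \<and> distinct Xs \<and> set Xs \<subseteq> set vs"
      using tg vp lenp drs rsv by auto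
  qed
  obtain w where wc: "wcert vs R w" using forestD(9)[OF f] by blast
  have wc': "\<exists>w. wcert (X0 # vs) R' w"
  proof
    define c where "c = 1 + (\<Sum>k<length ps. ps ! k * w (rs ! k))"
    show "wcert (X0 # vs) R' (w(X0 := c))"
    proof (rule wcert_extend[OF wf wc X0(1) ag _ tgs])
      have "0 \<le> (\<Sum>k<length ps. ps ! k * w (rs ! k))"
        by (rule sum_ge_zero[OF vp]) (use wcert_D1[OF wc] rsk in force)
      then show "1 \<le> c" by (simp add: c_def)
    next
      fix qs Xs assume "(Tau, qs, Xs) \<in> set (fst (R' X0))"
      then show "1 + (\<Sum>k<length qs. qs ! k * w (Xs ! k)) \<le> c" using tg by (auto simp: c_def)
    qed
  qed
  have hc': "\<forall>k<length [Pre \<alpha> P]. \<forall>U. \<not> (\<exists>V\<subseteq>U. ugN ([Pre \<alpha> P] ! k) V) \<longrightarrow>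
      (\<exists>h. hcert (X0 # vs) R' U h \<and> h ([X0] ! k) < 1)"
  proof (intro allI impI)
    fix k U assume k: "k < length [Pre \<alpha> P]" and c: "\<not> (\<exists>V\<subseteq>U. ugN ([Pre \<alpha> P] ! k) V)"
    then have c': "\<not> (\<exists>V\<subseteq>U. ugN (Pre \<alpha> P) V)" by simp
    have "\<exists>h. hcert (X0 # vs) R' U h \<and> h X0 < 1"
    proof (cases "\<alpha> = Tau")
      case True
      have cP: "\<not> (\<exists>V\<subseteq>U. ugP P V)" using c' True by (auto intro: ugN_ugP.intros)
      have "\<exists>E\<in>set (lexps P). \<not> (\<exists>V\<subseteq>U. ugN E V)"
      proof (rule ccontr)
        assume "\<not> (\<exists>E\<in>set (lexps P). \<not> (\<exists>V\<subseteq>U. ugN E V))"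
        then have "\<exists>V\<subseteq>U. ugP P V" by (intro ug_lexps) blast
        then show False using cP by blast
      qed
      then obtain j where j: "j < length (lexps P)" and cj: "\<not> (\<exists>V\<subseteq>U. ugN (lexps P ! j) V)"
        by (metis in_set_conv_nth)
      obtain h where hc: "hcert vs R U h" and hj: "h (rs ! j) < 1"
        using forestD(10)[OF f, rule_format, OF j cj] by blast
      define c where "c = (\<Sum>k<length ps. ps ! k * h (rs ! k))"
      have hb: "\<And>k. k < length ps \<Longrightarrow> 0 \<le> h (rs ! k) \<and> h (rs ! k) \<le> 1"
        using hcert_D1[OF hc] rsk by blast
      have c0: "0 \<le> c" unfolding c_def by (rule sum_ge_zero[OF vp]) (use hb in blast)
      have c1: "c < 1"
      proof -
        have j': "j < length ps" using j len lenp by simp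
        have "c < (\<Sum>k<length ps. ps ! k * 1)" unfolding c_def
        proof (rule sum_strict_mono_ex1)
          show "\<forall>k\<in>{..<length ps}. ps ! k * h (rs ! k) \<le> ps ! k * 1"
            using hb valid_nth_pos[OF vp] by (auto intro: mult_left_mono less_imp_le)
          show "\<exists>k\<in>{..<length ps}. ps ! k * h (rs ! k) < ps ! k * 1"
            using j' hj valid_nth_pos[OF vp j'] by (intro bexI[of _ j]) auto
        qed simp
        then show ?thesis using valid_sum_nth[OF vp] by simp
      qed
      have "hcert (X0 # vs) R' U (h(X0 := c))"
      proof (rule hcert_extend[OF wf hc X0(1) ag c0 _ _ tgs])
        show "c \<le> 1" using c1 by simp
        show "set (snd (R' X0)) \<inter> U \<noteq> {} \<Longrightarrow> c = 1" by (simp add: R'X0)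
      next
        fix qs Xs assume "(Tau, qs, Xs) \<in> set (fst (R' X0))"
        then show "(\<Sum>k<length qs. qs ! k * h (Xs ! k)) \<le> c" using tg by (auto simp: c_def)
      qed
      then show ?thesis using c1 by (intro exI[of _ "h(X0 := c)"]) simp
    next
      case False
      have "hcert (X0 # vs) R' U ((\<lambda>_. 1)(X0 := 0))"
      proof (rule hcert_extend[OF wf hcert_one[OF wf] X0(1) ag _ _ _ tgs])
        show "set (snd (R' X0)) \<inter> U \<noteq> {} \<Longrightarrow> 0 = 1" by (simp add: R'X0)
      next
        fix qs Xs assume "(Tau, qs, Xs) \<in> set (fst (R' X0))"
        then show "(\<Sum>k<length qs. qs ! k * 1) \<le> 0" using tg False by auto
      qed simp_all
      then show ?thesis by (intro exI[of _ "(\<lambda>_. 1)(X0 := 0)"]) simp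
    qed
    then show "\<exists>h. hcert (X0 # vs) R' U h \<and> h ([X0] ! k) < 1" using k by simp
  qed
  have th': "\<forall>\<theta>. \<exists>Es. (\<forall>k<length [Pre \<alpha> P]. Es ([X0] ! k) = substN \<theta> ([Pre \<alpha> P] ! k)) \<and> sol (X0 # vs) R' \<theta> Es"
  proof
    fix \<theta>
    obtain Es where Es: "\<forall>k<length (lexps P). Es (rs ! k) = substN \<theta> (lexps P ! k)" "sol vs R \<theta> Es"
      using forestD(11)[OF f] by blast
    define E0 where "E0 = substN \<theta> (Pre \<alpha> P)"
    define \<sigma>' where "\<sigma>' = (\<lambda>Y. if Y \<in> set (X0 # vs) then (Es(X0 := E0)) Y else \<theta> Y)"
    have nv: "\<And>Z. Z \<in> set vs \<Longrightarrow> X0 \<notin> set (snd (R Z))" using V X0 by blast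
    have m: "map (\<lambda>X. Dirac (\<sigma>' X)) rs = map Dirac (map (substN \<theta>) (lexps P))"
    proof (rule nth_equalityI)
      show "length (map (\<lambda>X. Dirac (\<sigma>' X)) rs) = length (map Dirac (map (substN \<theta>) (lexps P)))"
        using len by simp
    next
      fix k assume "k < length (map (\<lambda>X. Dirac (\<sigma>' X)) rs)"
      then have k: "k < length rs" by simp
      have "rs ! k \<in> set vs" using k rsv by auto
      then have "\<sigma>' (rs ! k) = Es (rs ! k)" using X0 by (auto simp: \<sigma>'_def)
      also have "\<dots> = substN \<theta> (lexps P ! k)" using Es(1) k len by simp
      finally show "map (\<lambda>X. Dirac (\<sigma>' X)) rs ! k = map Dirac (map (substN \<theta>) (lexps P)) ! k"
        using k len by simp
    qed
    have r0: "eqN E0 (substN \<sigma>' (Trhs R' X0))"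
    proof -
      have T: "Trhs R' X0 = tm (\<alpha>, ps, rs)" by (simp add: Trhs_def R'X0)
      have "substN \<sigma>' (Trhs R' X0) = Pre \<alpha> (bigopP (lprobs P) (map Dirac (map (substN \<theta>) (lexps P))))"
        unfolding T subst_tm m ps_def ..
      moreover have "eqN E0 (Pre \<alpha> (bigopP (lprobs P) (map Dirac (map (substN \<theta>) (lexps P)))))"
        unfolding E0_def substN.simps by (intro eqN_eqP.congPre flatten_subst wP)
      ultimately show ?thesis by simp
    qed
    have "sol (X0 # vs) R' \<theta> (Es(X0 := E0))"
      using sol_extend[OF wf Es(2) X0(1) ag nv r0[unfolded \<sigma>'_def]] .
    then show "\<exists>Es. (\<forall>k<length [Pre \<alpha> P]. Es ([X0] ! k) = substN \<theta> ([Pre \<alpha> P] ! k)) \<and> sol (X0 # vs) R' \<theta> Es"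
      by (intro exI[of _ "Es(X0 := E0)"]) (simp add: E0_def)
  qed
  have V': "\<forall>Z\<in>set (X0 # vs). set (snd (R' Z)) \<subseteq> (\<Union>G\<in>set [Pre \<alpha> P]. fvN G)"
  proof
    fix Z assume "Z \<in> set (X0 # vs)"
    then show "set (snd (R' Z)) \<subseteq> (\<Union>G\<in>set [Pre \<alpha> P]. fvN G)"
      using V ag by (cases "Z = X0") (auto simp: R'X0)
  qed
  have I': "\<forall>k<length [Pre \<alpha> P]. \<forall>v\<in>set (snd (R' ([X0] ! k))). ugN ([Pre \<alpha> P] ! k) {v}"
    by (simp add: R'X0)
  show ?thesis unfolding R'_def[symmetric]
    apply (rule forestI)
    subgoal by simp
    subgoal using dv X0 by simp
    subgoal by simp
    subgoal using disj X0 by auto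
    subgoal by simp
    subgoal by (rule wf')
    subgoal by (rule V')
    subgoal by (rule I')
    subgoal by (rule wc')
    subgoal by (rule hc')
    subgoal by (rule th')
    done
qed


lemma forest_rec:
  fixes E :: "('a,'v) nexp"
  assumes inf: "infinite (UNIV :: 'v set)" and f: "forest [E] (A \<union> {X}) vs R [r]" and g: "\<not> ugN E {X}"
  shows "forest [Rec X E] A vs (\<lambda>Z. if X \<in> set (snd (R Z))
      then (fst (R Z) @ fst (R r), filter (\<lambda>v. v \<noteq> X) (snd (R Z)) @ snd (R r)) else R Z) [r]"
proof -
  define R' where "R' = (\<lambda>Z. if X \<in> set (snd (R Z))
      then (fst (R Z) @ fst (R r), filter (\<lambda>v. v \<noteq> X) (snd (R Z)) @ snd (R r)) else R Z)"
  have dv: "distinct vs" by (rule forestD(2)[OF f])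
  have disj: "set vs \<inter> (A \<union> {X} \<union> fvN E) = {}" using forestD(4)[OF f] by simp
  have r: "r \<in> set vs" using forestD(5)[OF f] by simp
  have wf: "wellf vs R" by (rule forestD(6)[OF f])
  have V: "\<And>Z. Z \<in> set vs \<Longrightarrow> set (snd (R Z)) \<subseteq> fvN E" using forestD(7)[OF f] by simp
  have I: "\<And>v. v \<in> set (snd (R r)) \<Longrightarrow> ugN E {v}" using forestD(8)[OF f, rule_format, of 0] by simp
  obtain w where wc: "wcert vs R w" using forestD(9)[OF f] by blast
  have hh: "\<And>U. \<not> (\<exists>V\<subseteq>U. ugN E V) \<Longrightarrow> \<exists>h. hcert vs R U h \<and> h r < 1"
    using forestD(10)[OF f, rule_format, of 0] by simp
  have th: "\<And>\<theta>. \<exists>Es. Es r = substN \<theta> E \<and> sol vs R \<theta> Es"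
    using forestD(11)[OF f] by simp
  have Xr: "X \<notin> set (snd (R r))" using I g by blast
  have Xvs: "X \<notin> set vs" using disj by blast
  have R'r: "R' r = R r" using Xr by (simp add: R'_def)
  have R'1: "\<And>Z. X \<in> set (snd (R Z)) \<Longrightarrow> R' Z = (fst (R Z) @ fst (R r), filter (\<lambda>v. v \<noteq> X) (snd (R Z)) @ snd (R r))"
    by (simp add: R'_def)
  have R'2: "\<And>Z. X \<notin> set (snd (R Z)) \<Longrightarrow> R' Z = R Z" by (simp add: R'_def)
  have lsum: "\<And>Z l. l \<in> set (fst (R' Z)) \<Longrightarrow> l \<in> set (fst (R Z)) \<or> (X \<in> set (snd (R Z)) \<and> l \<in> set (fst (R r)))"
    by (auto simp: R'_def split: if_splits)
  have wf': "wellf vs R'"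
    unfolding wellf_def
  proof (intro ballI)
    fix Z l assume Z: "Z \<in> set vs" and l: "l \<in> set (fst (R' Z))"
    obtain \<alpha> ps Xs where lx: "l = (\<alpha>, ps, Xs)" by (cases l) auto
    show "case l of (\<alpha>, ps, Xs) \<Rightarrow> valid_probs ps \<and> length Xs = length ps \<and> distinct Xs \<and> set Xs \<subseteq> set vs"
      using lsum[OF l] wellf_D[OF wf Z, of \<alpha> ps Xs] wellf_D[OF wf r, of \<alpha> ps Xs] lx by auto
  qed
  have V': "\<forall>Z\<in>set vs. set (snd (R' Z)) \<subseteq> (\<Union>G\<in>set [Rec X E]. fvN G)"
  proof
    fix Z assume Z: "Z \<in> set vs"
    show "set (snd (R' Z)) \<subseteq> (\<Union>G\<in>set [Rec X E]. fvN G)"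
    proof (cases "X \<in> set (snd (R Z))")
      case True then show ?thesis using V[OF Z] V[OF r] Xr by (auto simp: R'1)
    next
      case False then show ?thesis using V[OF Z] by (auto simp: R'2)
    qed
  qed
  have I': "\<forall>k<length [Rec X E]. \<forall>v\<in>set (snd (R' ([r] ! k))). ugN ([Rec X E] ! k) {v}"
  proof (intro allI impI ballI)
    fix k v assume k: "k < length [Rec X E]" and v: "v \<in> set (snd (R' ([r] ! k)))"
    then have v': "v \<in> set (snd (R r))" using R'r by simp
    have "v \<noteq> X" using v' Xr by blast
    then have "{v} \<noteq> {X}" by simp
    from ugN_ugP.intros(3)[OF I[OF v'] this] have "ugN (Rec X E) ({v} - {X})" .
    then show "ugN ([Rec X E] ! k) {v}" using k \<open>v \<noteq> X\<close> by simp
  qed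
  have cX: "\<not> (\<exists>V\<subseteq>{X}. ugN E V)"
  proof
    assume "\<exists>V\<subseteq>{X}. ugN E V"
    then obtain V where "V \<subseteq> {X}" "ugN E V" by blast
    moreover then have "V \<noteq> {}" using ug_nonempty(1) by blast
    ultimately have "V = {X}" by blast
    then show False using g \<open>ugN E V\<close> by simp
  qed
  obtain h0 where h0: "hcert vs R {X} h0" "h0 r < 1" using hh[OF cX] by blast
  have wc': "\<exists>w. wcert vs R' w"
  proof
    define c where "c = w r / (1 - h0 r)"
    have hr: "0 < 1 - h0 r" using h0 by simp
    have wr: "1 \<le> w r" using wcert_D1[OF wc r] .
    have c0: "0 \<le> c" using hr wr by (simp add: c_def)
    have cc: "c * (1 - h0 r) = w r" using hr by (simp add: c_def)
    show "wcert vs R' (\<lambda>Z. w Z + c * h0 Z)"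
      unfolding wcert_def
    proof (intro conjI ballI impI)
      fix Z assume Z: "Z \<in> set vs"
      have "0 \<le> c * h0 Z" using hcert_D1[OF h0(1) Z] c0 by simp
      then show "1 \<le> w Z + c * h0 Z" using wcert_D1[OF wc Z] by linarith
    next
      fix Z l assume Z: "Z \<in> set vs" and l: "l \<in> set (fst (R' Z))"
      obtain \<alpha> ps Xs where lx: "l = (\<alpha>, ps, Xs)" by (cases l) auto
      show "case l of (\<alpha>, ps, Xs) \<Rightarrow> \<alpha> = Tau \<longrightarrow> 1 + (\<Sum>k<length ps. ps ! k * (w (Xs ! k) + c * h0 (Xs ! k))) \<le> w Z + c * h0 Z"
      proof (simp only: lx prod.case, intro impI)
        assume a: "\<alpha> = Tau"
        have split: "(\<Sum>k<length ps. ps ! k * (w (Xs ! k) + c * h0 (Xs ! k)))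
            = (\<Sum>k<length ps. ps ! k * w (Xs ! k)) + c * (\<Sum>k<length ps. ps ! k * h0 (Xs ! k))"
          by (simp add: sum.distrib sum_distrib_left algebra_simps)
        show "1 + (\<Sum>k<length ps. ps ! k * (w (Xs ! k) + c * h0 (Xs ! k))) \<le> w Z + c * h0 Z"
        proof (cases "(\<alpha>, ps, Xs) \<in> set (fst (R Z))")
          case True
          have 1: "1 + (\<Sum>k<length ps. ps ! k * w (Xs ! k)) \<le> w Z" using wcert_D[OF wc Z] True a by blast
          have 2: "(\<Sum>k<length ps. ps ! k * h0 (Xs ! k)) \<le> h0 Z" using hcert_D[OF h0(1) Z] True a by blast
          have "c * (\<Sum>k<length ps. ps ! k * h0 (Xs ! k)) \<le> c * h0 Z" using 2 c0 by (rule mult_left_mono)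
          then show ?thesis using 1 split by simp
        next
          case False
          then have XZ: "X \<in> set (snd (R Z))" and lr: "(\<alpha>, ps, Xs) \<in> set (fst (R r))"
            using lsum[OF l] lx by auto
          have 1: "1 + (\<Sum>k<length ps. ps ! k * w (Xs ! k)) \<le> w r" using wcert_D[OF wc r] lr a by blast
          have 2: "(\<Sum>k<length ps. ps ! k * h0 (Xs ! k)) \<le> h0 r" using hcert_D[OF h0(1) r] lr a by blast
          have "set (snd (R Z)) \<inter> {X} \<noteq> {}" using XZ by blast
          from hcert_D2[OF h0(1) Z this] have hZ: "h0 Z = 1" .
          have "c * (\<Sum>k<length ps. ps ! k * h0 (Xs ! k)) \<le> c * h0 r" using 2 c0 by (rule mult_left_mono)
          moreover have "w r + c * h0 r = c" using cc by (simp add: algebra_simps)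
          moreover have "0 \<le> w Z" using wcert_D1[OF wc Z] by simp
          ultimately show ?thesis using 1 split hZ by simp
        qed
      qed
    qed
  qed
  have hc': "\<forall>k<length [Rec X E]. \<forall>U. \<not> (\<exists>V\<subseteq>U. ugN ([Rec X E] ! k) V) \<longrightarrow>
      (\<exists>h. hcert vs R' U h \<and> h ([r] ! k) < 1)"
  proof (intro allI impI)
    fix k U assume k: "k < length [Rec X E]" and c: "\<not> (\<exists>V\<subseteq>U. ugN ([Rec X E] ! k) V)"
    then have c': "\<not> (\<exists>V\<subseteq>U. ugN (Rec X E) V)" by simp
    have c1: "\<not> (\<exists>V\<subseteq>U \<union> {X}. ugN E V)"
    proof
      assume "\<exists>V\<subseteq>U \<union> {X}. ugN E V"
      then obtain V where V1: "V \<subseteq> U \<union> {X}" and uV: "ugN E V" by blast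
      show False
      proof (cases "V = {X}")
        case True then show False using g uV by simp
      next
        case False
        from ugN_ugP.intros(3)[OF uV False] have "ugN (Rec X E) (V - {X})" .
        moreover have "V - {X} \<subseteq> U" using V1 by blast
        ultimately show False using c' by blast
      qed
    qed
    obtain h where h: "hcert vs R (U \<union> {X}) h" "h r < 1" using hh[OF c1] by blast
    have "hcert vs R' U h"
      unfolding hcert_def
    proof (intro conjI ballI impI)
      fix Z assume Z: "Z \<in> set vs"
      show "0 \<le> h Z" "h Z \<le> 1" using hcert_D1[OF h(1) Z] by auto
    next
      fix Z assume Z: "Z \<in> set vs" and u: "set (snd (R' Z)) \<inter> U \<noteq> {}"
      show "h Z = 1"
      proof (cases "X \<in> set (snd (R Z))")
        case True
        then have "set (snd (R Z)) \<inter> (U \<union> {X}) \<noteq> {}" by blast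
        from hcert_D2[OF h(1) Z this] show ?thesis .
      next
        case False
        then have "set (snd (R Z)) \<inter> (U \<union> {X}) \<noteq> {}" using u R'2[OF False] by auto
        from hcert_D2[OF h(1) Z this] show ?thesis .
      qed
    next
      fix Z l assume Z: "Z \<in> set vs" and l: "l \<in> set (fst (R' Z))"
      obtain \<alpha> ps Xs where lx: "l = (\<alpha>, ps, Xs)" by (cases l) auto
      show "case l of (\<alpha>, ps, Xs) \<Rightarrow> \<alpha> = Tau \<longrightarrow> (\<Sum>k<length ps. ps ! k * h (Xs ! k)) \<le> h Z"
      proof (simp only: lx prod.case, intro impI)
        assume a: "\<alpha> = Tau"
        show "(\<Sum>k<length ps. ps ! k * h (Xs ! k)) \<le> h Z"
        proof (cases "(\<alpha>, ps, Xs) \<in> set (fst (R Z))")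
          case True then show ?thesis using hcert_D[OF h(1) Z] a by blast
        next
          case False
          then have XZ: "X \<in> set (snd (R Z))" and lr: "(\<alpha>, ps, Xs) \<in> set (fst (R r))"
            using lsum[OF l] lx by auto
          have "(\<Sum>k<length ps. ps ! k * h (Xs ! k)) \<le> h r" using hcert_D[OF h(1) r] lr a by blast
          moreover have "h r \<le> 1" using hcert_D1[OF h(1) r] by simp
          moreover have "set (snd (R Z)) \<inter> (U \<union> {X}) \<noteq> {}" using XZ by blast
          from hcert_D2[OF h(1) Z this] have "h Z = 1" .
          ultimately show ?thesis by simp
        qed
      qed
    qed
    then show "\<exists>h. hcert vs R' U h \<and> h ([r] ! k) < 1" using h(2) k by (intro exI[of _ h]) simp
  qed
  have th': "\<forall>\<theta>. \<exists>Es. (\<forall>k<length [Rec X E]. Es ([r] ! k) = substN \<theta> ([Rec X E] ! k)) \<and> sol vs R' \<theta> Es"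
  proof
    fix \<theta> :: "'v \<Rightarrow> ('a,'v) nexp"
    define Y where "Y = fresh_for X (\<Union>z\<in>fvN E - {X}. fvN (\<theta> z))"
    define EY where "EY = substN (\<theta>(X := NVar Y)) E"
    define RY where "RY = Rec Y EY"
    have RYdef: "substN \<theta> (Rec X E) = RY" by (simp add: substN_Rec Y_def EY_def RY_def)
    have finA: "finite (\<Union>z\<in>fvN E - {X}. fvN (\<theta> z))" using fv_finite by auto
    have Yf: "Y \<notin> (\<Union>z\<in>fvN E - {X}. fvN (\<theta> z))" unfolding Y_def by (rule fresh_for_notin[OF inf finA])
    define \<theta>2 where "\<theta>2 = \<theta>(X := RY)"
    obtain Es2 where Es2: "Es2 r = substN \<theta>2 E" "sol vs R \<theta>2 Es2" using th by blast
    have K1: "eqN RY (Es2 r)"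
    proof -
      have "eqN RY (subst1 EY RY Y)" unfolding RY_def by (rule eqN_eqP.R1)
      also have "subst1 EY RY Y = substN (NVar(Y := RY)) (substN (\<theta>(X := NVar Y)) E)"
        by (simp add: subst1_def EY_def)
      also have "eqN \<dots> (substN (\<lambda>v. substN (NVar(Y := RY)) ((\<theta>(X := NVar Y)) v)) E)"
        by (rule subst_comp(1)[OF inf])
      also have "substN (\<lambda>v. substN (NVar(Y := RY)) ((\<theta>(X := NVar Y)) v)) E = substN \<theta>2 E"
      proof (rule subst_cong)
        fix v assume v: "v \<in> fvN E"
        show "substN (NVar(Y := RY)) ((\<theta>(X := NVar Y)) v) = \<theta>2 v"
        proof (cases "v = X")
          case True then show ?thesis by (simp add: \<theta>2_def)
        next
          case False
          then have "Y \<notin> fvN (\<theta> v)" using Yf v by blast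
          then have "substN (NVar(Y := RY)) (\<theta> v) = \<theta> v" by (intro subst_id) auto
          then show ?thesis using False by (simp add: \<theta>2_def)
        qed
      qed
      finally show ?thesis using Es2(1) by simp
    qed
    define Es' where "Es' = Es2(r := RY)"
    define \<sigma>' where "\<sigma>' = (\<lambda>Y'. if Y' \<in> set vs then Es' Y' else \<theta> Y')"
    define \<sigma>2 where "\<sigma>2 = (\<lambda>Y'. if Y' \<in> set vs then Es2 Y' else \<theta>2 Y')"
    have pw: "\<And>Y'. Y' \<in> set vs \<Longrightarrow> eqN (\<sigma>2 Y') (\<sigma>' Y')"
      using K1 by (auto simp: \<sigma>2_def \<sigma>'_def Es'_def intro: eN_sym eN_refl)
    have pwV: "\<And>Y'. Y' \<notin> set vs \<Longrightarrow> Y' \<noteq> X \<Longrightarrow> \<sigma>2 Y' = \<sigma>' Y'"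
      by (simp add: \<sigma>2_def \<sigma>'_def \<theta>2_def)
    have Vd: "\<And>Z v. Z \<in> set vs \<Longrightarrow> v \<in> set (snd (R Z)) \<Longrightarrow> v \<notin> set vs"
      using V disj by blast
    have eqZ: "\<And>Z. eqN (Es' Z) (Es2 Z)"
      using K1 by (auto simp: Es'_def intro: eN_refl)
    have caseA: "\<And>Z. Z \<in> set vs \<Longrightarrow> X \<notin> set (snd (R Z)) \<Longrightarrow> eqN (Es' Z) (substN \<sigma>' (Trhs R' Z))"
    proof -
      fix Z assume Z: "Z \<in> set vs" and XZ: "X \<notin> set (snd (R Z))"
      have "eqN (Es' Z) (Es2 Z)" by (rule eqZ)
      also have "eqN (Es2 Z) (substN \<sigma>2 (Trhs R Z))" using sol_D[OF Es2(2) Z] unfolding \<sigma>2_def .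
      also have "eqN (substN \<sigma>2 (Trhs R Z)) (substN \<sigma>' (Trhs R Z))"
      proof (rule cong_Trhs[OF wf Z])
        fix Y' assume "Y' \<in> set vs \<union> set (snd (R Z))"
        then show "eqN (\<sigma>2 Y') (\<sigma>' Y')"
        proof
          assume "Y' \<in> set vs" then show ?thesis by (rule pw)
        next
          assume Y': "Y' \<in> set (snd (R Z))"
          then have "\<sigma>2 Y' = \<sigma>' Y'" using pwV Vd[OF Z] XZ by metis
          then show ?thesis by (simp add: eN_refl)
        qed
      qed
      finally show "eqN (Es' Z) (substN \<sigma>' (Trhs R' Z))" using R'2[OF XZ] by (simp add: Trhs_def)
    qed
    define B where "B = substN \<sigma>' (Trhs R r)"
    have KB: "eqN RY B" using caseA[OF r Xr] R'r unfolding B_def Es'_def by (simp add: Trhs_def)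
    have caseB: "\<And>Z. Z \<in> set vs \<Longrightarrow> X \<in> set (snd (R Z)) \<Longrightarrow> eqN (Es' Z) (substN \<sigma>' (Trhs R' Z))"
    proof -
      fix Z assume Z: "Z \<in> set vs" and XZ: "X \<in> set (snd (R Z))"
      have Zr: "Z \<noteq> r" using XZ Xr by blast
      define \<sigma>3 where "\<sigma>3 = \<sigma>'(X := B)"
      define ys where "ys = map (\<lambda>l. substN \<sigma>' (tm l)) (fst (R Z)) @ map \<sigma>' (filter (\<lambda>v. v \<noteq> X) (snd (R Z)))"
      define bs where "bs = map (\<lambda>l. substN \<sigma>' (tm l)) (fst (R r)) @ map \<sigma>' (snd (R r))"
      have Bbs: "B = sumlist bs" unfolding B_def bs_def subst_Trhs ..
      have "eqN (Es' Z) (substN \<sigma>2 (Trhs R Z))"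
        using sol_D[OF Es2(2) Z] Zr unfolding \<sigma>2_def Es'_def by simp
      also have "substN \<sigma>2 (Trhs R Z) = sumlist (map (\<lambda>l. substN \<sigma>2 (tm l)) (fst (R Z)) @ map \<sigma>2 (snd (R Z)))"
        by (rule subst_Trhs)
      also have "eqN \<dots> (sumlist (map (\<lambda>l. substN \<sigma>' (tm l)) (fst (R Z)) @ map \<sigma>3 (snd (R Z))))"
      proof (rule cong_sumlist, rule list_all2_appendI)
        show "list_all2 eqN (map (\<lambda>l. substN \<sigma>2 (tm l)) (fst (R Z))) (map (\<lambda>l. substN \<sigma>' (tm l)) (fst (R Z)))"
          unfolding list_all2_map1 list_all2_map2
        proof (rule list.rel_refl_strong)
          fix l assume l: "l \<in> set (fst (R Z))"
          obtain \<alpha> ps Xs where lx: "l = (\<alpha>, ps, Xs)" by (cases l) auto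
          have "set Xs \<subseteq> set vs" using wellf_D[OF wf Z] l lx by blast
          then show "eqN (substN \<sigma>2 (tm l)) (substN \<sigma>' (tm l))" unfolding lx
            by (intro cong_tm pw) auto
        qed
        show "list_all2 eqN (map \<sigma>2 (snd (R Z))) (map \<sigma>3 (snd (R Z)))"
          unfolding list_all2_map1 list_all2_map2
        proof (rule list.rel_refl_strong)
          fix v assume v: "v \<in> set (snd (R Z))"
          show "eqN (\<sigma>2 v) (\<sigma>3 v)"
          proof (cases "v = X")
            case True then show ?thesis using KB Xvs by (simp add: \<sigma>2_def \<sigma>3_def \<theta>2_def)
          next
            case False then show ?thesis using pwV[OF Vd[OF Z v] False] by (simp add: \<sigma>3_def eN_refl)
          qed
        qed
      qed
      also have "eqN \<dots> (sumlist (ys @ [B]))"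
      proof (rule sum_set)
        have "set (map \<sigma>3 (snd (R Z))) = \<sigma>' ` (set (snd (R Z)) - {X}) \<union> {B}"
          using XZ by (auto simp: \<sigma>3_def)
        then show "set (map (\<lambda>l. substN \<sigma>' (tm l)) (fst (R Z)) @ map \<sigma>3 (snd (R Z))) = set (ys @ [B])"
          unfolding ys_def by auto
      qed
      also have "eqN \<dots> (NSum (sumlist ys) (sumlist [B]))" by (rule eN_sym, rule sum_app)
      also have "NSum (sumlist ys) (sumlist [B]) = NSum (sumlist ys) (sumlist bs)" by (simp add: Bbs)
      also have "eqN \<dots> (sumlist (ys @ bs))" by (rule sum_app)
      also have "eqN \<dots> (substN \<sigma>' (Trhs R' Z))"
        unfolding subst_Trhs R'1[OF XZ] by (rule sum_set) (auto simp: ys_def bs_def)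
      finally show "eqN (Es' Z) (substN \<sigma>' (Trhs R' Z))" .
    qed
    have "sol vs R' \<theta> Es'"
      unfolding sol_def
    proof
      fix Z assume Z: "Z \<in> set vs"
      show "eqN (Es' Z) (substN (\<lambda>Y. if Y \<in> set vs then Es' Y else \<theta> Y) (Trhs R' Z))"
        using caseA[OF Z] caseB[OF Z] unfolding \<sigma>'_def by blast
    qed
    moreover have "Es' r = substN \<theta> (Rec X E)" using RYdef by (simp add: Es'_def)
    ultimately show "\<exists>Es. (\<forall>k<length [Rec X E]. Es ([r] ! k) = substN \<theta> ([Rec X E] ! k)) \<and> sol vs R' \<theta> Es"
      by (intro exI[of _ Es']) simp
  qed
  show ?thesis unfolding R'_def[symmetric]
    apply (rule forestI)
    subgoal by simp
    subgoal by (rule dv)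
    subgoal by simp
    subgoal using disj by auto
    subgoal using r by simp
    subgoal by (rule wf')
    subgoal by (rule V')
    subgoal by (rule I')
    subgoal by (rule wc')
    subgoal by (rule hc')
    subgoal by (rule th')
    done
qed


lemma forest_list:
  assumes IH: "\<And>G. G \<in> set Gs \<Longrightarrow> \<forall>A. finite A \<longrightarrow> (\<exists>vs R r. forest [G] A vs R [r])"
    and fin: "finite A"
  shows "\<exists>vs R rs. forest Gs A vs R rs"
  using IH fin
proof (induct Gs arbitrary: A)
  case Nil then show ?case using forest_nil by blast
next
  case (Cons G Gs)
  have finA: "finite (A \<union> fvN G)" using Cons.prems(2) fv_finite by auto
  obtain vs2 R2 rs2 where f2: "forest Gs (A \<union> fvN G) vs2 R2 rs2"
    using Cons.hyps[OF _ finA] Cons.prems(1) by force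
  have finB: "finite (A \<union> set vs2 \<union> (\<Union>G\<in>set Gs. fvN G))" using Cons.prems(2) fv_finite by auto
  obtain vs1 R1 r1 where f1: "forest [G] (A \<union> set vs2 \<union> (\<Union>G\<in>set Gs. fvN G)) vs1 R1 [r1]"
    using Cons.prems(1)[of G] finB by force
  have d1: "set vs1 \<inter> set vs2 = {}" using forestD(4)[OF f1] by blast
  have d2: "set vs1 \<inter> (\<Union>G\<in>set Gs. fvN G) = {}" using forestD(4)[OF f1] by blast
  have d3: "set vs2 \<inter> fvN G = {}" using forestD(4)[OF f2] by blast
  have "forest (G # Gs) ((A \<union> set vs2 \<union> (\<Union>G\<in>set Gs. fvN G)) \<inter> (A \<union> fvN G)) (vs1 @ vs2) (mrg vs1 R1 R2) (r1 # rs2)"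
    by (rule forest_cons[OF f1 f2 d1 d2 d3])
  then have "forest (G # Gs) A (vs1 @ vs2) (mrg vs1 R1 R2) (r1 # rs2)"
    by (rule forest_mono) blast
  then show ?case by blast
qed

lemma fresh_exists: "infinite (UNIV :: 'v set) \<Longrightarrow> finite (B :: 'v set) \<Longrightarrow> \<exists>X0. X0 \<notin> B"
  by (metis ex_new_if_finite)

lemma forest_nil_expr:
  assumes X0: "X0 \<notin> A"
  shows "forest [NNil] A [X0] (\<lambda>_. ([], [])) [X0]"
proof (rule forestI)
  show "wellf [X0] (\<lambda>_. ([], []))" by (simp add: wellf_def)
  show "\<exists>w. wcert [X0] (\<lambda>_. ([], [])) w" by (rule exI[of _ "\<lambda>_. 1"]) (simp add: wcert_def)
  show "\<forall>k<length [NNil]. \<forall>U. \<not> (\<exists>V\<subseteq>U. ugN ([NNil] ! k) V) \<longrightarrow> (\<exists>h. hcert [X0] (\<lambda>_. ([], [])) U h \<and> h ([X0] ! k) < 1)"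
    by (auto intro!: exI[of _ "\<lambda>_. 0"] simp: hcert_def)
  show "\<forall>\<theta>. \<exists>Es. (\<forall>k<length [NNil]. Es ([X0] ! k) = substN \<theta> ([NNil] ! k)) \<and> sol [X0] (\<lambda>_. ([], [])) \<theta> Es"
    by (auto intro!: exI[of _ "\<lambda>_. NNil"] simp: sol_def Trhs_def eN_refl)
qed (use X0 in auto)

lemma forest_var_expr:
  assumes X0: "X0 \<notin> A" "X0 \<noteq> v"
  shows "forest [NVar v] A [X0] (\<lambda>_. ([], [v])) [X0]"
proof (rule forestI)
  show "wellf [X0] (\<lambda>_. ([], [v]))" by (simp add: wellf_def)
  show "\<exists>w. wcert [X0] (\<lambda>_. ([], [v])) w" by (rule exI[of _ "\<lambda>_. 1"]) (simp add: wcert_def)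
  show "\<forall>k<length [NVar v]. \<forall>U. \<not> (\<exists>V\<subseteq>U. ugN ([NVar v] ! k) V) \<longrightarrow> (\<exists>h. hcert [X0] (\<lambda>_. ([], [v])) U h \<and> h ([X0] ! k) < 1)"
  proof (intro allI impI)
    fix k U assume k: "k < length [NVar v]" and c: "\<not> (\<exists>V\<subseteq>U. ugN ([NVar v] ! k) V)"
    have "v \<notin> U" using c k by (auto intro: ugN_ugP.intros)
    then show "\<exists>h. hcert [X0] (\<lambda>_. ([], [v])) U h \<and> h ([X0] ! k) < 1"
      by (intro exI[of _ "\<lambda>_. 0"]) (simp add: hcert_def)
  qed
  show "\<forall>\<theta>. \<exists>Es. (\<forall>k<length [NVar v]. Es ([X0] ! k) = substN \<theta> ([NVar v] ! k)) \<and> sol [X0] (\<lambda>_. ([], [v])) \<theta> Es"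
    using X0 by (auto intro!: exI[of _ "\<lambda>_. \<theta> v" for \<theta>] simp: sol_def Trhs_def eN_refl)
qed (use X0 in \<open>auto intro: ugN_ugP.intros\<close>)

lemma main_forest:
  fixes E :: "('a,'v) nexp" and P :: "('a,'v) pexp"
  assumes inf: "infinite (UNIV :: 'v set)"
  shows "wfN E \<longrightarrow> guardedN E \<longrightarrow> (\<forall>A. finite A \<longrightarrow> (\<exists>vs R r. forest [E] A vs R [r]))"
    "wfP P \<longrightarrow> guardedP P \<longrightarrow> (\<forall>G\<in>set (lexps P). \<forall>A. finite A \<longrightarrow> (\<exists>vs R r. forest [G] A vs R [r]))"
proof (induct E and P)
  case NNil
  show ?case
  proof (intro impI allI)
    fix A :: "'v set" assume "finite A"
    from fresh_exists[OF inf this] obtain X0 where "X0 \<notin> A" ..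
    then have "forest [NNil :: ('a,'v) nexp] A [X0] (\<lambda>_. ([], [])) [X0]" by (rule forest_nil_expr)
    then show "\<exists>vs R r. forest [NNil :: ('a,'v) nexp] A vs R [r]" by blast
  qed
next
  case (NVar v)
  show ?case
  proof (intro impI allI)
    fix A :: "'v set" assume "finite A"
    then have "finite (A \<union> {v})" by simp
    from fresh_exists[OF inf this] obtain X0 where "X0 \<notin> A \<union> {v}" ..
    then have "forest [NVar v :: ('a,'v) nexp] A [X0] (\<lambda>_. ([], [v])) [X0]" by (intro forest_var_expr) auto
    then show "\<exists>vs R r. forest [NVar v :: ('a,'v) nexp] A vs R [r]" by blast
  qed
next
  case (Pre \<alpha> P)
  show ?case
  proof (intro impI allI)
    fix A :: "'v set" assume wf: "wfN (Pre \<alpha> P)" and g: "guardedN (Pre \<alpha> P)" and fin: "finite A"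
    have wP: "wfP P" and gP: "guardedP P" using wf g by simp_all
    have IHP: "\<forall>G\<in>set (lexps P). \<forall>A. finite A \<longrightarrow> (\<exists>vs R r. forest [G] A vs R [r])"
      using Pre wP gP by blast
    have "\<exists>vs R rs. forest (lexps P) A vs R rs"
      by (rule forest_list[OF _ fin]) (use IHP in blast)
    then obtain vs R rs where f: "forest (lexps P) A vs R rs" by blast
    have "finite (A \<union> set vs \<union> fvP P)" using fin fv_finite by auto
    from fresh_exists[OF inf this] obtain X0 where X0: "X0 \<notin> A \<union> set vs \<union> fvP P" ..
    have "forest [Pre \<alpha> P] A (X0 # vs) (R(X0 := ([(\<alpha>, lprobs P, rs)], []))) [X0]"
      by (rule forest_pre[OF f]) (use wf X0 in auto)
    then show "\<exists>vs R r. forest [Pre \<alpha> P] A vs R [r]" by blast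
  qed
next
  case (Rec X E)
  show ?case
  proof (intro impI allI)
    fix A :: "'v set" assume wf: "wfN (Rec X E)" and g: "guardedN (Rec X E)" and fin: "finite A"
    have fin': "finite (A \<union> {X})" using fin by simp
    have wE: "wfN E" and gE: "guardedN E" using wf g by simp_all
    have IHE: "\<forall>A. finite A \<longrightarrow> (\<exists>vs R r. forest [E] A vs R [r])" using Rec wE gE by blast
    obtain vs R r where f: "forest [E] (A \<union> {X}) vs R [r]"
      using IHE fin' by blast
    have gX: "\<not> ugN E {X}" using g by simp
    from forest_rec[OF inf f gX] show "\<exists>vs R r. forest [Rec X E] A vs R [r]" by blast
  qed
next
  case (NSum E F)
  show ?case
  proof (intro impI allI)
    fix A :: "'v set" assume wf: "wfN (NSum E F)" and g: "guardedN (NSum E F)" and fin: "finite A"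
    have wE: "wfN E" and gE: "guardedN E" and wF: "wfN F" and gF: "guardedN F" using wf g by simp_all
    have IHE: "\<forall>A. finite A \<longrightarrow> (\<exists>vs R r. forest [E] A vs R [r])" using NSum(1) wE gE by blast
    have IHF: "\<forall>A. finite A \<longrightarrow> (\<exists>vs R r. forest [F] A vs R [r])" using NSum(2) wF gF by blast
    have "\<exists>vs R rs. forest [E, F] A vs R rs"
      by (rule forest_list[OF _ fin]) (use IHE IHF in auto)
    then obtain vs R rs where f: "forest [E, F] A vs R rs" by blast
    have "length rs = 2" using forestD(1)[OF f] by simp
    then obtain r1 r2 where rs: "rs = [r1, r2]"
      by (metis (no_types, lifting) One_nat_def Suc_1 length_0_conv length_Suc_conv)
    have "finite (A \<union> set vs \<union> fvN E \<union> fvN F)" using fin fv_finite by auto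
    from fresh_exists[OF inf this] obtain X0 where X0: "X0 \<notin> A \<union> set vs \<union> fvN E \<union> fvN F" ..
    have "forest [NSum E F] A (X0 # vs) (R(X0 := (fst (R r1) @ fst (R r2), snd (R r1) @ snd (R r2)))) [X0]"
      by (rule forest_nsum[OF f[unfolded rs]]) (use X0 in auto)
    then show "\<exists>vs R r. forest [NSum E F] A vs R [r]" by blast
  qed
next
  case (Dirac E)
  then show ?case by simp
next
  case (PCh p P Q)
  show ?case
  proof (intro impI)
    assume wf: "wfP (PCh p P Q)" and g: "guardedP (PCh p P Q)"
    have 1: "\<forall>G\<in>set (lexps P). \<forall>A. finite A \<longrightarrow> (\<exists>vs R r. forest [G] A vs R [r])"
      using PCh(1) wf g by simp
    have 2: "\<forall>G\<in>set (lexps Q). \<forall>A. finite A \<longrightarrow> (\<exists>vs R r. forest [G] A vs R [r])"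
      using PCh(2) wf g by simp
    show "\<forall>G\<in>set (lexps (PCh p P Q)). \<forall>A. finite A \<longrightarrow> (\<exists>vs R r. forest [G] A vs R [r])"
      unfolding lexps.simps set_append using 1 2 by blast
  qed
qed


theorem mainTheorem18:
  fixes E :: "('a, 'v) nexp"
  assumes "infinite (UNIV :: 'v set)"
    and "wfN E"
    and "guardedN E"
  shows "\<exists>S :: ('a, 'v) eqsys. is_eqsys S \<and> standard S \<and> guarded_sys S
            \<and> sys_vars S \<subseteq> fvN E \<and> satisfies E S"
proof -
  have "\<exists>vs R r. forest [E] {} vs R [r]"
    using main_forest(1)[OF assms(1), rule_format, OF assms(2) assms(3) finite.emptyI] .
  then obtain vs R r where f: "forest [E] {} vs R [r]" by blast
  have dv: "distinct vs" by (rule forestD(2)[OF f])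
  have disj: "set vs \<inter> fvN E = {}" using forestD(4)[OF f] by simp
  have r: "r \<in> set vs" using forestD(5)[OF f] by simp
  have wf: "wellf vs R" by (rule forestD(6)[OF f])
  have V: "\<And>Z. Z \<in> set vs \<Longrightarrow> set (snd (R Z)) \<subseteq> fvN E" using forestD(7)[OF f] by simp
  obtain w where wc: "wcert vs R w" using forestD(9)[OF f] by blast
  have th: "\<And>\<theta>. \<exists>Es. Es r = substN \<theta> E \<and> sol vs R \<theta> Es" using forestD(11)[OF f] by simp
  define vs' where "vs' = r # remove1 r vs"
  have sv: "set vs' = set vs" using r dv by (auto simp: vs'_def)
  have dv': "distinct vs'" using dv by (simp add: vs'_def)
  have wf': "wellf vs' R" using wf unfolding wellf_def sv .
  have wc': "wcert vs' R w" using wc unfolding wcert_def sv .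
  define S where "S = mksys vs' R"
  have fS: "formal S = set vs" unfolding S_def formal_mksys sv ..
  have memS: "\<And>X T. (X, T) \<in> set S \<Longrightarrow> X \<in> set vs \<and> T = Trhs R X"
    using sv by (auto simp: S_def mksys_def)
  have iss: "is_eqsys S"
    unfolding is_eqsys_def S_def mksys_def using dv' by (simp add: vs'_def comp_def)
  have st: "standard S"
    unfolding standard_def
  proof (intro ballI)
    fix p assume p: "p \<in> set S"
    obtain X T where pX: "p = (X, T)" by (cases p) auto
    have X: "X \<in> set vs" and T: "T = Trhs R X" using memS p pX by auto
    have "standard_rhs S T"
      unfolding standard_rhs_def
    proof (intro exI conjI)
      show "T = sumlist (map (\<lambda>(\<alpha>, ps, Xs). Pre \<alpha> (bigop ps (map NVar Xs))) (fst (R X)) @ map NVar (snd (R X)))"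
        unfolding T Trhs_def tm_def ..
      show "\<forall>(\<alpha>, ps, Xs)\<in>set (fst (R X)). valid_probs ps \<and> length Xs = length ps \<and> distinct Xs \<and> set Xs \<subseteq> formal S"
        using wellf_D[OF wf X] unfolding fS by blast
      show "set (snd (R X)) \<inter> formal S = {}" using V[OF X] disj unfolding fS by blast
    qed
    then show "case p of (X, T) \<Rightarrow> standard_rhs S T" using pX by simp
  qed
  have gs: "guarded_sys S" unfolding S_def by (rule guarded_mksys[OF wf' wc'])
  have sysv: "sys_vars S \<subseteq> fvN E"
    unfolding sys_vars_def
  proof
    fix v assume "v \<in> (\<Union>(X, T)\<in>set S. fvN T) - formal S"
    then obtain X T where XT: "(X, T) \<in> set S" and v: "v \<in> fvN T" and vf: "v \<notin> set vs"
      unfolding fS by blast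
    have X: "X \<in> set vs" and T: "T = Trhs R X" using memS[OF XT] by auto
    have "v \<in> set vs \<union> set (snd (R X))" using fv_Trhs_vs[OF wf X] v T by blast
    then show "v \<in> fvN E" using vf V[OF X] by blast
  qed
  obtain Es where Es: "Es r = substN NVar E" "sol vs R NVar Es" using th by blast
  have EsE: "Es r = E" using Es(1) subst_id(1)[of E NVar] by simp
  have sat: "satisfies E S"
    unfolding satisfies_def
  proof (intro exI conjI ballI)
    show "Es (fst (hd S)) = E" using EsE by (simp add: S_def mksys_def vs'_def)
  next
    fix p assume p: "p \<in> set S"
    obtain X T where pX: "p = (X, T)" by (cases p) auto
    have X: "X \<in> set vs" and T: "T = Trhs R X" using memS p pX by auto
    have "eqN (Es X) (substN (\<lambda>Y. if Y \<in> formal S then Es Y else NVar Y) T)"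
      unfolding fS T by (rule sol_D[OF Es(2) X])
    then show "case p of (X, T) \<Rightarrow> eqN (Es X) (substN (\<lambda>Y. if Y \<in> formal S then Es Y else NVar Y) T)"
      using pX by simp
  qed
  show ?thesis using iss st gs sysv sat by blast
qed


end
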